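(* Assume (A1) and (A2). For each $\theta\in\Theta$ the series $\widehat H_\theta=\sum_{n\ge0}\big(P_\theta^nH(\cdot,\theta)-h(\theta)\big)$ converges uniformly on $\mathsf X$ and $\widehat H_\theta$ solves the Poisson equation $\widehat H_\theta-P_\theta\widehat H_\theta=H(\cdot,\theta)-h(\theta)$. Moreover $\sup_{\theta\in\Theta,x\in\mathsf X}|\widehat H_\theta(x)|<\infty$, and there exists a constant $C>0$ such that for all $\theta,\theta'\in\Theta$, $$\sup_{x\in\mathsf X}\Big\{\big|\widehat H_\theta(x)-\widehat H_{\theta'}(x)\big|+\big|P_\theta\widehat H_\theta(x)-P_{\theta'}\widehat H_{\theta'}(x)\big|\Big\}\le C\,\frac{|\theta-\theta'|}{\min_{1\le i\le d}\{\theta(i)\wedge\theta'(i)\}}.$$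
   Context: Setting: $(\mathsf X,\mathcal X)$ Polish space with Borel $\sigma$-algebra and $\sigma$-finite reference measure $\lambda$; $\pi$ a probability density w.r.t. $\lambda$; $d\ge2$; $\mathsf X_1,\dots,\mathsf X_d$ a measurable partition of $\mathsf X$; $I(x)=i$ iff $x\in\mathsf X_i$; $\theta_\star(i)=\int_{\mathsf X_i}\pi\,d\lambda$; $\Theta=\{\theta\in(0,1)^d:\sum_i\theta(i)=1\}$; $\pi_\theta(x)=\big(\sum_{i}\theta_\star(i)/\theta(i)\big)^{-1}\sum_{i}\frac{\pi(x)}{\theta(i)}\mathbf 1_{\mathsf X_i}(x)$; $H_i(x,\theta)=\theta(i)(\mathbf 1_{\mathsf X_i}(x)-\theta(I(x)))$ (vector-valued, components handled coordinatewise), $h(\theta)=\int H(x,\theta)\pi_\theta(x)\lambda(dx)$; $|\cdot|$ is the Euclidean norm. (A1): $0<\inf\pi\le\sup\pi<\infty$ and $\min_i\theta_\star(i)>0$. (A2): $P_\theta$ is the Metropolis–Hastings kernel with target $\pi_\theta\,d\lambda$, symmetric proposal density $q$ w.r.t. $\lambda$ with $\inf_{\mathsf X^2}q>0$, acceptance $1\wedge\pi_\theta(y)/\pi_\theta(x)$. *)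

theory Defs
  imports "HOL-Probability.Probability"
begin

definition cellidx :: "('d::finite \<Rightarrow> 'a set) \<Rightarrow> 'a \<Rightarrow> 'd" where
  "cellidx Xs x = (THE i. x \<in> Xs i)"

definition theta_star :: "'a measure \<Rightarrow> ('a \<Rightarrow> real) \<Rightarrow> ('d::finite \<Rightarrow> 'a set) \<Rightarrow> real^'d" where
  "theta_star lam p Xs = (\<chi> i. (\<integral>x\<in>Xs i. p x \<partial>lam))"

definition Theta :: "(real^'d::finite) set" where
  "Theta = {\<theta>. (\<forall>i. 0 < \<theta>$i \<and> \<theta>$i < 1) \<and> (\<Sum>i\<in>UNIV. \<theta>$i) = 1}"

definition pi_theta :: "'a measure \<Rightarrow> ('a \<Rightarrow> real) \<Rightarrow> ('d::finite \<Rightarrow> 'a set) \<Rightarrow> real^'d \<Rightarrow> 'a \<Rightarrow> real" where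
  "pi_theta lam p Xs \<theta> x =
     inverse (\<Sum>i\<in>UNIV. theta_star lam p Xs $ i / \<theta>$i) *
     (\<Sum>i\<in>UNIV. p x / \<theta>$i * indicator (Xs i) x)"

definition Hfun :: "('d::finite \<Rightarrow> 'a set) \<Rightarrow> 'a \<Rightarrow> real^'d \<Rightarrow> real^'d" where
  "Hfun Xs x \<theta> = (\<chi> i. \<theta>$i * (indicator (Xs i) x - \<theta>$(cellidx Xs x)))"

definition hmean :: "'a measure \<Rightarrow> ('a \<Rightarrow> real) \<Rightarrow> ('d::finite \<Rightarrow> 'a set) \<Rightarrow> real^'d \<Rightarrow> real^'d" where
  "hmean lam p Xs \<theta> = (\<integral>x. pi_theta lam p Xs \<theta> x *\<^sub>R Hfun Xs x \<theta> \<partial>lam)"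

text \<open>Metropolis--Hastings kernel P_theta with target pi_theta d lambda and proposal
  density q, acting on a (bounded measurable) real function f:
  P f(x) = int f(y) alpha(x,y) q(x,y) lambda(dy) + (1 - int alpha(x,y) q(x,y) lambda(dy)) f(x),
  with alpha(x,y) = 1 min pi_theta(y)/pi_theta(x).\<close>
definition MH_accept :: "'a measure \<Rightarrow> ('a \<Rightarrow> real) \<Rightarrow> ('d::finite \<Rightarrow> 'a set) \<Rightarrow> real^'d \<Rightarrow> 'a \<Rightarrow> 'a \<Rightarrow> real" where
  "MH_accept lam p Xs \<theta> x y = min 1 (pi_theta lam p Xs \<theta> y / pi_theta lam p Xs \<theta> x)"

definition MH_op :: "'a measure \<Rightarrow> ('a \<Rightarrow> real) \<Rightarrow> ('d::finite \<Rightarrow> 'a set) \<Rightarrow> ('a \<Rightarrow> 'a \<Rightarrow> real)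
    \<Rightarrow> real^'d \<Rightarrow> ('a \<Rightarrow> real) \<Rightarrow> 'a \<Rightarrow> real" where
  "MH_op lam p Xs q \<theta> f x =
     (\<integral>y. f y * MH_accept lam p Xs \<theta> x y * q x y \<partial>lam)
     + (1 - (\<integral>y. MH_accept lam p Xs \<theta> x y * q x y \<partial>lam)) * f x"

definition MH_vec :: "'a measure \<Rightarrow> ('a \<Rightarrow> real) \<Rightarrow> ('d::finite \<Rightarrow> 'a set) \<Rightarrow> ('a \<Rightarrow> 'a \<Rightarrow> real)
    \<Rightarrow> real^'d \<Rightarrow> ('a \<Rightarrow> real^'d) \<Rightarrow> 'a \<Rightarrow> real^'d" where
  "MH_vec lam p Xs q \<theta> F x = (\<chi> i. MH_op lam p Xs q \<theta> (\<lambda>y. F y $ i) x)"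

definition Hterm :: "'a measure \<Rightarrow> ('a \<Rightarrow> real) \<Rightarrow> ('d::finite \<Rightarrow> 'a set) \<Rightarrow> ('a \<Rightarrow> 'a \<Rightarrow> real)
    \<Rightarrow> real^'d \<Rightarrow> nat \<Rightarrow> 'a \<Rightarrow> real^'d" where
  "Hterm lam p Xs q \<theta> n =
     (\<lambda>x. (MH_vec lam p Xs q \<theta> ^^ n) (\<lambda>y. Hfun Xs y \<theta>) x - hmean lam p Xs \<theta>)"

definition Hhat :: "'a measure \<Rightarrow> ('a \<Rightarrow> real) \<Rightarrow> ('d::finite \<Rightarrow> 'a set) \<Rightarrow> ('a \<Rightarrow> 'a \<Rightarrow> real)
    \<Rightarrow> real^'d \<Rightarrow> 'a \<Rightarrow> real^'d" where
  "Hhat lam p Xs q \<theta> x = (\<Sum>n. Hterm lam p Xs q \<theta> n x)"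

end

theory Submission
  imports Defs
begin

locale MHL =
  fixes lam :: "'a measure" and p :: "'a \<Rightarrow> real" and Xs :: "'d::finite \<Rightarrow> 'a set"
    and q :: "'a \<Rightarrow> 'a \<Rightarrow> real"
  assumes lam_sf: "sigma_finite_measure lam"
    and p_meas[measurable]: "p \<in> borel_measurable lam"
    and p_nonneg: "\<And>x. 0 \<le> p x"
    and p_int: "integrable lam p"
    and Xs_meas[measurable]: "\<And>i. Xs i \<in> sets lam"
    and Xs_disj: "\<And>i j. i \<noteq> j \<Longrightarrow> Xs i \<inter> Xs j = {}"
    and Xs_cover: "(\<Union>i. Xs i) = UNIV"
    and A1_inf: "\<exists>c>0. \<forall>x. c \<le> p x"
    and A1_sup: "\<exists>C. \<forall>x. p x \<le> C"
    and A1_ts: "\<And>i. 0 < theta_star lam p Xs $ i"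
    and q_meas[measurable]: "(\<lambda>(x, y). q x y) \<in> borel_measurable (lam \<Otimes>\<^sub>M lam)"
    and q_sym: "\<And>x y. q x y = q y x"
    and q_nonneg: "\<And>x y. 0 \<le> q x y"
    and q_int: "\<And>x. integrable lam (q x)"
    and q_dens: "\<And>x. (\<integral>y. q x y \<partial>lam) = 1"
    and q_inf: "\<exists>c>0. \<forall>x y. c \<le> q x y"
begin

sublocale sigma_finite_measure lam by (rule lam_sf)
sublocale PS: pair_sigma_finite lam lam by unfold_locales

abbreviation "ts \<equiv> theta_star lam p Xs"
definition "Z \<theta> = (\<Sum>i\<in>UNIV. ts $ i / \<theta> $ i)"
abbreviation "pit \<equiv> pi_theta lam p Xs"
abbreviation "P \<equiv> MH_op lam p Xs q"
definition "kk \<theta> x y = MH_accept lam p Xs \<theta> x y * q x y"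
definition "pint \<theta> f = (\<integral>x. pit \<theta> x * f x \<partial>lam)"
definition "bm (f::'a \<Rightarrow> real) \<longleftrightarrow> f \<in> borel_measurable lam \<and> (\<exists>B. \<forall>x. \<bar>f x\<bar> \<le> B)"

definition "cq = (SOME c. c > 0 \<and> (\<forall>x y. c \<le> q x y))"
definition "Cp = (SOME C. \<forall>x. p x \<le> C)"
definition "tsmin = Min (range (\<lambda>i. ts $ i))"
definition "Mpi = Cp / tsmin"
definition "eps = min (1/2) (cq / Mpi)"

lemma cq: "cq > 0" "\<And>x y. cq \<le> q x y"
  using someI_ex[OF q_inf] unfolding cq_def by auto
lemma Cp: "\<And>x. p x \<le> Cp"
  using someI_ex[OF A1_sup] unfolding Cp_def by auto
lemma Cp_pos: "Cp > 0"
proof -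
  obtain c where "c > 0" "\<And>x. c \<le> p x" using A1_inf by auto
  then show ?thesis using Cp[of undefined] by (meson less_le_trans)
qed
lemma tsmin: "tsmin > 0" "\<And>i. tsmin \<le> ts $ i"
proof -
  have "tsmin \<in> range (\<lambda>i. ts $ i)" unfolding tsmin_def by (rule Min_in) auto
  then show "tsmin > 0" using A1_ts by auto
  show "\<And>i. tsmin \<le> ts $ i" unfolding tsmin_def by (rule Min_le) auto
qed
lemma Mpi_pos: "Mpi > 0" using Cp_pos tsmin unfolding Mpi_def by simp
lemma eps: "0 < eps" "eps \<le> 1/2" "eps \<le> cq / Mpi"
  using cq Mpi_pos unfolding eps_def by (auto simp: min_def)

lemma cell: "x \<in> Xs (cellidx Xs x)"
proof -
  obtain i where i: "x \<in> Xs i" using Xs_cover by auto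
  have "\<exists>!i. x \<in> Xs i" using i Xs_disj by blast
  then show ?thesis unfolding cellidx_def by (rule theI')
qed
lemma cell_iff: "x \<in> Xs j \<longleftrightarrow> j = cellidx Xs x"
  using cell Xs_disj by blast
lemma ind_cell: "indicator (Xs j) x = (if j = cellidx Xs x then 1 else (0::real))"
  using cell_iff by (auto simp: indicator_def)

lemma sum_cell: "(\<Sum>j\<in>UNIV. f j * indicator (Xs j) x) = (f (cellidx Xs x) :: real)"
  by (simp add: ind_cell if_distrib cong: if_cong)

lemma cell_sum: "(\<theta>::real^'d) $ (cellidx Xs x) = (\<Sum>j\<in>UNIV. \<theta> $ j * indicator (Xs j) x)"
  by (simp add: sum_cell)

lemma Theta_pos: "\<theta> \<in> Theta \<Longrightarrow> 0 < \<theta> $ i" and Theta_le1: "\<theta> \<in> Theta \<Longrightarrow> \<theta> $ i < 1"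
  unfolding Theta_def by auto

lemma ts_int: "ts $ i = (\<integral>x. p x * indicator (Xs i) x \<partial>lam)"
  unfolding theta_star_def set_lebesgue_integral_def by (simp add: mult.commute)

lemma Z_pos: "\<theta> \<in> Theta \<Longrightarrow> Z \<theta> > 0"
  unfolding Z_def using A1_ts Theta_pos
  by (intro sum_pos) (auto intro: divide_pos_pos)

lemma Z_ge: assumes "\<theta> \<in> Theta" shows "ts $ j \<le> \<theta> $ j * Z \<theta>"
proof -
  have "ts $ j / \<theta> $ j \<le> Z \<theta>" unfolding Z_def
    using A1_ts Theta_pos[OF assms]
    by (intro member_le_sum) (auto intro: less_imp_le)
  then show ?thesis using Theta_pos[OF assms, of j] by (simp add: field_simps)
qed

lemma pit_eq: assumes "\<theta> \<in> Theta"
  shows "pit \<theta> x = p x / (Z \<theta> * \<theta> $ cellidx Xs x)"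
proof -
  have "(\<Sum>i\<in>UNIV. p x / \<theta> $ i * indicator (Xs i) x) = p x / \<theta> $ cellidx Xs x"
    by (rule sum_cell)
  then show ?thesis unfolding pi_theta_def Z_def[symmetric] by (simp add: field_simps)
qed

lemma pit_meas[measurable]: "pit \<theta> \<in> borel_measurable lam"
  unfolding pi_theta_def by measurable

lemma pit_pos: assumes "\<theta> \<in> Theta" shows "pit \<theta> x > 0"
proof -
  obtain c where "c > 0" "\<And>x. c \<le> p x" using A1_inf by auto
  then show ?thesis using pit_eq[OF assms] Z_pos[OF assms] Theta_pos[OF assms]
    by (metis divide_pos_pos less_le_trans mult_pos_pos)
qed

lemma pit_le: assumes "\<theta> \<in> Theta" shows "pit \<theta> x \<le> Mpi"
proof -
  let ?j = "cellidx Xs x"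
  have "tsmin \<le> Z \<theta> * \<theta> $ ?j" using Z_ge[OF assms, of ?j] tsmin(2)[of ?j] by (simp add: mult.commute)
  then have "p x / (Z \<theta> * \<theta> $ ?j) \<le> Cp / tsmin"
    using Cp[of x] p_nonneg[of x] tsmin(1) by (intro frac_le) auto
  then show ?thesis using pit_eq[OF assms] unfolding Mpi_def by simp
qed

lemma pit_le_p: assumes "\<theta> \<in> Theta" shows "pit \<theta> x \<le> p x / tsmin"
proof -
  let ?j = "cellidx Xs x"
  have "tsmin \<le> Z \<theta> * \<theta> $ ?j" using Z_ge[OF assms, of ?j] tsmin(2)[of ?j] by (simp add: mult.commute)
  then show ?thesis using pit_eq[OF assms] p_nonneg[of x] tsmin(1)
    by (simp add: frac_le)
qed

end

context MHL begin

lemma acc_eq: "MH_accept lam p Xs \<theta> x y = min 1 (pit \<theta> y / pit \<theta> x)"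
  unfolding MH_accept_def ..

lemma kk_meas[measurable]: "(\<lambda>(x, y). kk \<theta> x y) \<in> borel_measurable (lam \<Otimes>\<^sub>M lam)"
  unfolding kk_def MH_accept_def
  using q_meas by measurable

lemma kk_meas2[measurable]: "(\<lambda>z. kk \<theta> (fst z) (snd z)) \<in> borel_measurable (lam \<Otimes>\<^sub>M lam)"
  using kk_meas by (simp add: case_prod_beta')

lemma kk_nonneg: assumes "\<theta> \<in> Theta" shows "0 \<le> kk \<theta> x y"
  unfolding kk_def acc_eq using pit_pos[OF assms] q_nonneg
  by (simp add: less_imp_le)

lemma kk_le_q: assumes "\<theta> \<in> Theta" shows "kk \<theta> x y \<le> q x y"
  unfolding kk_def acc_eq using mult_right_mono[of "min 1 (pit \<theta> y / pit \<theta> x)" 1 "q x y"] q_nonneg[of x y]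
  by simp

lemma kk_minor: assumes "\<theta> \<in> Theta" shows "eps * pit \<theta> y \<le> kk \<theta> x y"
proof -
  have px: "0 < pit \<theta> x" "pit \<theta> x \<le> Mpi" and py: "0 < pit \<theta> y" "pit \<theta> y \<le> Mpi"
    using pit_pos[OF assms] pit_le[OF assms] by auto
  have "pit \<theta> y / Mpi \<le> min 1 (pit \<theta> y / pit \<theta> x)"
    using px py Mpi_pos by (auto simp: frac_le)
  moreover have "eps * pit \<theta> y \<le> cq * (pit \<theta> y / Mpi)"
    using eps(3) py Mpi_pos by (metis less_imp_le mult_right_mono times_divide_eq_left times_divide_eq_right)
  moreover have "cq * min 1 (pit \<theta> y / pit \<theta> x) \<le> min 1 (pit \<theta> y / pit \<theta> x) * q x y"
    using cq px py by (simp add: mult.commute mult_left_mono)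
  moreover have "cq * (pit \<theta> y / Mpi) \<le> cq * min 1 (pit \<theta> y / pit \<theta> x)"
    using cq(1) calculation(1) by (intro mult_left_mono) auto
  ultimately show ?thesis unfolding kk_def acc_eq by linarith
qed

lemma detailed: assumes "\<theta> \<in> Theta" shows "pit \<theta> x * kk \<theta> x y = pit \<theta> y * kk \<theta> y x"
proof -
  have px: "0 < pit \<theta> x" and py: "0 < pit \<theta> y" using pit_pos[OF assms] by auto
  have "pit \<theta> x * min 1 (pit \<theta> y / pit \<theta> x) = min (pit \<theta> x) (pit \<theta> y)"
    using px by (simp add: min_def field_simps)
  moreover have "pit \<theta> y * min 1 (pit \<theta> x / pit \<theta> y) = min (pit \<theta> x) (pit \<theta> y)"
    using py by (simp add: min_def field_simps)
  ultimately show ?thesis unfolding kk_def acc_eq using q_sym[of x y]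
    by (metis mult.assoc)
qed

lemma q_meas_y[measurable]: "q x \<in> borel_measurable lam"
  using q_int by (rule borel_measurable_integrable)

lemma kk_meas_y[measurable]: "kk \<theta> x \<in> borel_measurable lam"
  unfolding kk_def acc_eq by measurable

lemma kk_int: assumes "\<theta> \<in> Theta" shows "integrable lam (kk \<theta> x)"
  apply (rule Bochner_Integration.integrable_bound[OF q_int[of x]])
  using kk_nonneg[OF assms] kk_le_q[OF assms] q_nonneg by auto

lemma K_le1: assumes "\<theta> \<in> Theta" shows "(\<integral>y. kk \<theta> x y \<partial>lam) \<le> 1"
  using integral_mono[OF kk_int[OF assms] q_int, of x] kk_le_q[OF assms] q_dens by auto

lemma K_nonneg: assumes "\<theta> \<in> Theta" shows "0 \<le> (\<integral>y. kk \<theta> x y \<partial>lam)"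
  using kk_nonneg[OF assms] by (simp add: integral_nonneg_AE)

lemma bmD: "bm f \<Longrightarrow> f \<in> borel_measurable lam" unfolding bm_def by auto

lemma fk_int: assumes "\<theta> \<in> Theta" "bm f" shows "integrable lam (\<lambda>y. f y * kk \<theta> x y)"
proof -
  obtain B where B: "\<And>x. \<bar>f x\<bar> \<le> B" and [measurable]: "f \<in> borel_measurable lam" using assms(2) unfolding bm_def by auto
  have "integrable lam (\<lambda>y. B * kk \<theta> x y)" using kk_int[OF assms(1)] by simp
  then show ?thesis
    apply (rule Bochner_Integration.integrable_bound)
    using B kk_nonneg[OF assms(1)] by (auto simp: abs_mult intro!: mult_right_mono order_trans[OF _ abs_ge_self])
qed

lemma P_eq: "P \<theta> f x = (\<integral>y. f y * kk \<theta> x y \<partial>lam) + (1 - (\<integral>y. kk \<theta> x y \<partial>lam)) * f x"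
  unfolding MH_op_def kk_def by (simp add: mult.assoc)

lemma P_meas: assumes "f \<in> borel_measurable lam" shows "P \<theta> f \<in> borel_measurable lam"
proof -
  have [measurable]: "f \<in> borel_measurable lam" by fact
  have "(\<lambda>x. \<integral>y. f y * kk \<theta> x y \<partial>lam) \<in> borel_measurable lam"
    by (rule borel_measurable_lebesgue_integral) measurable
  moreover have "(\<lambda>x. \<integral>y. kk \<theta> x y \<partial>lam) \<in> borel_measurable lam"
    by (rule borel_measurable_lebesgue_integral) measurable
  ultimately show ?thesis unfolding P_eq[abs_def] by measurable
qed

lemma P_bound: assumes "\<theta> \<in> Theta" "bm f" "\<And>x. \<bar>f x\<bar> \<le> B" shows "\<bar>P \<theta> f x\<bar> \<le> B"
proof -
  let ?K = "\<integral>y. kk \<theta> x y \<partial>lam"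
  have "\<bar>\<integral>y. f y * kk \<theta> x y \<partial>lam\<bar> \<le> (\<integral>y. \<bar>f y * kk \<theta> x y\<bar> \<partial>lam)"
    by (rule integral_abs_bound)
  also have "\<dots> \<le> (\<integral>y. B * kk \<theta> x y \<partial>lam)"
    apply (rule integral_mono)
    using integrable_abs[OF fk_int[OF assms(1,2)], of x] kk_int[OF assms(1)] assms(3) kk_nonneg[OF assms(1)]
    by (auto simp: abs_mult intro!: mult_right_mono)
  also have "\<dots> = B * ?K" by simp
  finally have 1: "\<bar>\<integral>y. f y * kk \<theta> x y \<partial>lam\<bar> \<le> B * ?K" .
  have 2: "\<bar>(1 - ?K) * f x\<bar> \<le> (1 - ?K) * B"
    using K_le1[OF assms(1)] assms(3)[of x] by (simp add: abs_mult mult_left_mono)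
  have 3: "B * ?K + (1 - ?K) * B = B" by (simp add: algebra_simps)
  show ?thesis unfolding P_eq using 1 2 3 abs_triangle_ineq[of "\<integral>y. f y * kk \<theta> x y \<partial>lam" "(1 - ?K) * f x"]
    by linarith
qed

lemma bm_P: assumes "\<theta> \<in> Theta" "bm f" shows "bm (P \<theta> f)"
  using assms P_meas P_bound unfolding bm_def by blast

lemma bm_add: assumes "bm f" "bm g" shows "bm (\<lambda>x. f x + g x)"
proof -
  obtain B1 B2 where [measurable]: "f \<in> borel_measurable lam" "g \<in> borel_measurable lam"
    and B: "\<And>x. \<bar>f x\<bar> \<le> B1" "\<And>x. \<bar>g x\<bar> \<le> B2" using assms unfolding bm_def by auto
  have "\<And>x. \<bar>f x + g x\<bar> \<le> B1 + B2" using B abs_triangle_ineq by (meson add_mono order_trans)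
  then show ?thesis unfolding bm_def by auto
qed
lemma bm_diff: assumes "bm f" "bm g" shows "bm (\<lambda>x. f x - g x)"
proof -
  obtain B1 B2 where [measurable]: "f \<in> borel_measurable lam" "g \<in> borel_measurable lam"
    and B: "\<And>x. \<bar>f x\<bar> \<le> B1" "\<And>x. \<bar>g x\<bar> \<le> B2" using assms unfolding bm_def by auto
  have "\<And>x. \<bar>f x - g x\<bar> \<le> B1 + B2" using B abs_triangle_ineq4 by (meson add_mono order_trans)
  then show ?thesis unfolding bm_def by auto
qed
lemma bm_const: "bm (\<lambda>x. c)" unfolding bm_def by auto
lemma bm_cmult: assumes "bm f" shows "bm (\<lambda>x. c * f x)"
proof -
  obtain B1 where [measurable]: "f \<in> borel_measurable lam"
    and B: "\<And>x. \<bar>f x\<bar> \<le> B1" using assms unfolding bm_def by auto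
  have "\<And>x. \<bar>c * f x\<bar> \<le> \<bar>c\<bar> * B1" using B by (simp add: abs_mult mult_left_mono)
  then show ?thesis unfolding bm_def by auto
qed

lemma P_add: assumes "\<theta> \<in> Theta" "bm f" "bm g"
  shows "P \<theta> (\<lambda>x. f x + g x) x = P \<theta> f x + P \<theta> g x"
proof -
  have "(\<integral>y. (f y + g y) * kk \<theta> x y \<partial>lam) = (\<integral>y. f y * kk \<theta> x y \<partial>lam) + (\<integral>y. g y * kk \<theta> x y \<partial>lam)"
    unfolding distrib_right by (rule Bochner_Integration.integral_add[OF fk_int[OF assms(1,2)] fk_int[OF assms(1,3)]])
  then show ?thesis unfolding P_eq by (simp add: distrib_left)
qed

lemma P_diff: assumes "\<theta> \<in> Theta" "bm f" "bm g"
  shows "P \<theta> (\<lambda>x. f x - g x) x = P \<theta> f x - P \<theta> g x"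
proof -
  have "(\<integral>y. (f y - g y) * kk \<theta> x y \<partial>lam) = (\<integral>y. f y * kk \<theta> x y \<partial>lam) - (\<integral>y. g y * kk \<theta> x y \<partial>lam)"
    unfolding left_diff_distrib by (rule Bochner_Integration.integral_diff[OF fk_int[OF assms(1,2)] fk_int[OF assms(1,3)]])
  then show ?thesis unfolding P_eq by (simp add: right_diff_distrib)
qed

lemma P_const: "P \<theta> (\<lambda>x. c) x = c"
  unfolding P_eq by (simp add: left_diff_distrib)

lemma P_sum: assumes "\<theta> \<in> Theta" "\<And>n. bm (G n)"
  shows "P \<theta> (\<lambda>x. \<Sum>n<(N::nat). G n x) x = (\<Sum>n<N. P \<theta> (G n) x)"
proof (induction N)
  case 0 then show ?case using P_const[of \<theta> 0 x] by simp
next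
  case (Suc N)
  have bmS: "bm (\<lambda>x. \<Sum>n<(N::nat). G n x)"
    by (induction N) (auto intro: bm_add bm_const assms(2))
  show ?case using P_add[OF assms(1) bmS assms(2)[of N]] Suc by simp
qed

lemma bm_sum: "(\<And>n. bm (G n)) \<Longrightarrow> bm (\<lambda>x. \<Sum>n<(N::nat). G n x)"
  by (induction N) (auto intro: bm_add bm_const)

end

context MHL begin

lemma bmE: assumes "bm f" obtains B where "f \<in> borel_measurable lam" "\<And>x. \<bar>f x\<bar> \<le> B"
  using assms unfolding bm_def by auto

lemma p_meas_f: assumes "bm g" shows "integrable lam (\<lambda>x. p x * g x)"
proof -
  obtain B where [measurable]: "g \<in> borel_measurable lam" and B: "\<And>x. \<bar>g x\<bar> \<le> B"
    using assms unfolding bm_def by auto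
  have I: "integrable lam (\<lambda>x. B * p x)" using p_int by simp
  have Bd: "\<bar>p x * g x\<bar> \<le> \<bar>B * p x\<bar>" for x
    using mult_left_mono[OF order_trans[OF B[of x] abs_ge_self] p_nonneg[of x]] p_nonneg[of x]
    by (simp add: abs_mult mult.commute)
  show ?thesis
    apply (rule Bochner_Integration.integrable_bound[OF I])
     apply measurable
    apply (rule AE_I2)
    using Bd by (simp only: real_norm_def)
qed

lemma bm_ind: assumes "bm f" shows "bm (\<lambda>x. indicator (Xs i) x * f x)"
proof -
  obtain B where [measurable]: "f \<in> borel_measurable lam" and B: "\<And>x. \<bar>f x\<bar> \<le> B"
    using assms unfolding bm_def by auto
  have "\<bar>indicator (Xs i) x * f x\<bar> \<le> B" for x using B[of x] by (auto simp: indicator_def)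
  then show ?thesis unfolding bm_def by auto
qed

lemma pint_int: assumes "\<theta> \<in> Theta" "bm f" shows "integrable lam (\<lambda>x. pit \<theta> x * f x)"
proof -
  obtain B where [measurable]: "f \<in> borel_measurable lam" and B: "\<And>x. \<bar>f x\<bar> \<le> B"
    using assms(2) unfolding bm_def by auto
  have I: "integrable lam (\<lambda>x. B / tsmin * p x)" using p_int by simp
  have Bd: "\<bar>pit \<theta> x * f x\<bar> \<le> \<bar>B / tsmin * p x\<bar>" for x
  proof -
    have "\<bar>pit \<theta> x * f x\<bar> = pit \<theta> x * \<bar>f x\<bar>" using pit_pos[OF assms(1), of x] by (simp add: abs_mult)
    also have "\<dots> \<le> p x / tsmin * \<bar>B\<bar>"
      using mult_mono[of "pit \<theta> x" "p x / tsmin" "\<bar>f x\<bar>" "\<bar>B\<bar>"] B[of x] pit_le_p[OF assms(1), of x]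
        p_nonneg[of x] tsmin(1) by force
    also have "\<dots> = \<bar>B / tsmin * p x\<bar>" using p_nonneg[of x] tsmin(1) by (simp add: abs_mult)
    finally show ?thesis .
  qed
  show ?thesis
    apply (rule Bochner_Integration.integrable_bound[OF I])
     apply measurable
    apply (rule AE_I2)
    using Bd by (simp only: real_norm_def)
qed

lemma pint_formula: assumes "\<theta> \<in> Theta" "bm f"
  shows "pint \<theta> f = inverse (Z \<theta>) * (\<Sum>i\<in>UNIV. (\<integral>x. p x * (indicator (Xs i) x * f x) \<partial>lam) / \<theta> $ i)"
proof -
  have eq: "pit \<theta> x * f x = inverse (Z \<theta>) * (\<Sum>i\<in>UNIV. p x * (indicator (Xs i) x * f x) / \<theta> $ i)" for x
  proof -
    have "(\<Sum>i\<in>UNIV. p x / \<theta> $ i * indicator (Xs i) x) * f x = (\<Sum>i\<in>UNIV. p x * (indicator (Xs i) x * f x) / \<theta> $ i)"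
      unfolding sum_distrib_right by (rule sum.cong) auto
    then show ?thesis unfolding pi_theta_def Z_def[symmetric] by (simp add: mult.assoc)
  qed
  have "pint \<theta> f = inverse (Z \<theta>) * (\<integral>x. (\<Sum>i\<in>UNIV. p x * (indicator (Xs i) x * f x) / \<theta> $ i) \<partial>lam)"
    unfolding pint_def eq by simp
  also have "(\<integral>x. (\<Sum>i\<in>UNIV. p x * (indicator (Xs i) x * f x) / \<theta> $ i) \<partial>lam)
      = (\<Sum>i\<in>UNIV. (\<integral>x. p x * (indicator (Xs i) x * f x) / \<theta> $ i \<partial>lam))"
    by (rule Bochner_Integration.integral_sum) (auto intro!: integrable_divide_zero p_meas_f bm_ind assms(2))
  finally show ?thesis by simp
qed

lemma pint_one: assumes "\<theta> \<in> Theta" shows "pint \<theta> (\<lambda>x. 1) = 1"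
proof -
  have "pint \<theta> (\<lambda>x. 1) = inverse (Z \<theta>) * Z \<theta>"
    unfolding pint_formula[OF assms bm_const] Z_def ts_int by simp
  then show ?thesis using Z_pos[OF assms] by simp
qed

lemma pint_const: assumes "\<theta> \<in> Theta" shows "pint \<theta> (\<lambda>x. c) = c"
  using pint_one[OF assms] unfolding pint_def by simp

lemma pint_add: assumes "\<theta> \<in> Theta" "bm f" "bm g"
  shows "pint \<theta> (\<lambda>x. f x + g x) = pint \<theta> f + pint \<theta> g"
  unfolding pint_def distrib_left
  by (rule Bochner_Integration.integral_add[OF pint_int[OF assms(1,2)] pint_int[OF assms(1,3)]])

lemma pint_diff: assumes "\<theta> \<in> Theta" "bm f" "bm g"
  shows "pint \<theta> (\<lambda>x. f x - g x) = pint \<theta> f - pint \<theta> g"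
  unfolding pint_def right_diff_distrib
  by (rule Bochner_Integration.integral_diff[OF pint_int[OF assms(1,2)] pint_int[OF assms(1,3)]])

lemma pint_bound: assumes "\<theta> \<in> Theta" "bm f" "\<And>x. \<bar>f x\<bar> \<le> B" shows "\<bar>pint \<theta> f\<bar> \<le> B"
proof -
  have "\<bar>pint \<theta> f\<bar> \<le> (\<integral>x. \<bar>pit \<theta> x * f x\<bar> \<partial>lam)" unfolding pint_def by (rule integral_abs_bound)
  also have "\<dots> \<le> (\<integral>x. pit \<theta> x * B \<partial>lam)"
    apply (rule integral_mono)
    using integrable_abs[OF pint_int[OF assms(1,2)]] pint_int[OF assms(1) bm_const, of B]
      pit_pos[OF assms(1)] assms(3)
    by (auto simp: abs_mult less_imp_le intro!: mult_left_mono)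
  also have "\<dots> = B" using pint_const[OF assms(1), of B] unfolding pint_def .
  finally show ?thesis .
qed

lemma contraction: assumes th: "\<theta> \<in> Theta" and f: "bm f" and B: "\<And>x. \<bar>f x\<bar> \<le> B"
  and z: "pint \<theta> f = 0"
  shows "\<bar>P \<theta> f x\<bar> \<le> (1 - eps) * B"
proof -
  let ?K = "\<integral>y. kk \<theta> x y \<partial>lam"
  have [measurable]: "f \<in> borel_measurable lam" using f by (rule bmD)
  have i1: "integrable lam (\<lambda>y. eps * (pit \<theta> y * f y))" using pint_int[OF th f] by simp
  have i2: "integrable lam (\<lambda>y. eps * pit \<theta> y)" using pint_int[OF th bm_const, of 1] by simp
  have "(\<integral>y. f y * kk \<theta> x y \<partial>lam) = (\<integral>y. f y * kk \<theta> x y - eps * (pit \<theta> y * f y) \<partial>lam)"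
    using Bochner_Integration.integral_diff[OF fk_int[OF th f] i1] z unfolding pint_def by simp
  also have "\<dots> = (\<integral>y. f y * (kk \<theta> x y - eps * pit \<theta> y) \<partial>lam)"
    by (simp add: algebra_simps)
  finally have e1: "(\<integral>y. f y * kk \<theta> x y \<partial>lam) = (\<integral>y. f y * (kk \<theta> x y - eps * pit \<theta> y) \<partial>lam)" .
  have i3: "integrable lam (\<lambda>y. f y * (kk \<theta> x y - eps * pit \<theta> y))"
    using Bochner_Integration.integrable_diff[OF fk_int[OF th f] i1] by (simp add: algebra_simps)
  have i4: "integrable lam (\<lambda>y. B * (kk \<theta> x y - eps * pit \<theta> y))"
    using Bochner_Integration.integrable_diff[OF kk_int[OF th] i2] by simp
  have "\<bar>\<integral>y. f y * (kk \<theta> x y - eps * pit \<theta> y) \<partial>lam\<bar> \<le> (\<integral>y. \<bar>f y * (kk \<theta> x y - eps * pit \<theta> y)\<bar> \<partial>lam)"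
    by (rule integral_abs_bound)
  also have "\<dots> \<le> (\<integral>y. B * (kk \<theta> x y - eps * pit \<theta> y) \<partial>lam)"
    apply (rule integral_mono[OF integrable_abs[OF i3] i4])
    using kk_minor[OF th] B by (auto simp: abs_mult intro!: mult_right_mono)
  also have "\<dots> = B * (?K - eps)"
    using Bochner_Integration.integral_diff[OF kk_int[OF th] i2, of x] pint_one[OF th]
    unfolding pint_def by simp
  finally have 1: "\<bar>\<integral>y. f y * kk \<theta> x y \<partial>lam\<bar> \<le> B * (?K - eps)" using e1 by simp
  have 2: "\<bar>(1 - ?K) * f x\<bar> \<le> (1 - ?K) * B"
    using K_le1[OF th] B[of x] by (simp add: abs_mult mult_left_mono)
  have 3: "B * (?K - eps) + (1 - ?K) * B = (1 - eps) * B" by (simp add: algebra_simps)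
  show ?thesis unfolding P_eq using 1 2 3 abs_triangle_ineq[of "\<integral>y. f y * kk \<theta> x y \<partial>lam" "(1 - ?K) * f x"]
    by linarith
qed

end

context MHL begin

lemma bm_A: assumes th: "\<theta> \<in> Theta" and f: "bm f"
  shows "bm (\<lambda>x. \<integral>y. f y * kk \<theta> x y \<partial>lam)" "bm (\<lambda>x. (\<integral>y. kk \<theta> x y \<partial>lam) * f x)"
proof -
  obtain B where [measurable]: "f \<in> borel_measurable lam" and B: "\<And>x. \<bar>f x\<bar> \<le> B"
    using f unfolding bm_def by auto
  define A where "A x = (\<integral>y. f y * kk \<theta> x y \<partial>lam)" for x
  define K where "K x = (\<integral>y. kk \<theta> x y \<partial>lam)" for x
  have [measurable]: "A \<in> borel_measurable lam" unfolding A_def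
    by (rule borel_measurable_lebesgue_integral) measurable
  have [measurable]: "K \<in> borel_measurable lam" unfolding K_def
    by (rule borel_measurable_lebesgue_integral) measurable
  have Kb: "0 \<le> K x" "K x \<le> 1" for x unfolding K_def using K_le1[OF th] K_nonneg[OF th] by auto
  have "\<bar>A x\<bar> \<le> B * K x" for x
  proof -
    have "\<bar>A x\<bar> \<le> (\<integral>y. \<bar>f y * kk \<theta> x y\<bar> \<partial>lam)" unfolding A_def by (rule integral_abs_bound)
    also have "\<dots> \<le> (\<integral>y. B * kk \<theta> x y \<partial>lam)"
      apply (rule integral_mono)
      using integrable_abs[OF fk_int[OF th f], of x] kk_int[OF th, of x] B kk_nonneg[OF th]
      by (auto simp: abs_mult intro!: mult_right_mono)
    also have "\<dots> = B * K x" unfolding K_def by simp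
    finally show ?thesis .
  qed
  moreover have "B * K x \<le> \<bar>B\<bar>" for x using Kb[of x]
    by (metis abs_ge_self abs_mult abs_of_nonneg mult.right_neutral mult_left_mono order_trans abs_ge_zero)
  ultimately have "\<bar>A x\<bar> \<le> \<bar>B\<bar>" for x by (meson order_trans)
  then show "bm (\<lambda>x. \<integral>y. f y * kk \<theta> x y \<partial>lam)" unfolding bm_def A_def[symmetric] by auto
  have "\<bar>K x * f x\<bar> \<le> \<bar>B\<bar>" for x using Kb[of x] B[of x]
    by (metis abs_ge_self abs_mult abs_of_nonneg mult_le_one mult_left_le_one_le order_trans abs_ge_zero)
  then show "bm (\<lambda>x. (\<integral>y. kk \<theta> x y \<partial>lam) * f x)" unfolding bm_def K_def[symmetric] by auto
qed

lemma st_fubini: assumes th: "\<theta> \<in> Theta" and f: "bm f"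
  shows "pint \<theta> (\<lambda>x. \<integral>y. f y * kk \<theta> x y \<partial>lam) = pint \<theta> (\<lambda>x. (\<integral>y. kk \<theta> x y \<partial>lam) * f x)"
proof -
  obtain B where [measurable]: "f \<in> borel_measurable lam" and B: "\<And>x. \<bar>f x\<bar> \<le> B"
    using f unfolding bm_def by auto
  define F where "F x y = pit \<theta> x * (f y * kk \<theta> x y)" for x y
  have Fm[measurable]: "(\<lambda>(x, y). F x y) \<in> borel_measurable (lam \<Otimes>\<^sub>M lam)"
    unfolding F_def by measurable
  have eqn: "(\<integral>y. norm (F x y) \<partial>lam) = pit \<theta> x * (\<integral>y. \<bar>f y\<bar> * kk \<theta> x y \<partial>lam)" for x
  proof -
    have "(\<integral>y. norm (F x y) \<partial>lam) = (\<integral>y. pit \<theta> x * (\<bar>f y\<bar> * kk \<theta> x y) \<partial>lam)"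
      unfolding F_def using pit_pos[OF th, of x] kk_nonneg[OF th]
      by (intro Bochner_Integration.integral_cong) (auto simp: abs_mult)
    then show ?thesis by simp
  qed
  have bmabs: "bm (\<lambda>y. \<bar>f y\<bar>)" using f unfolding bm_def by auto
  have i1: "integrable lam (\<lambda>x. \<integral>y. norm (F x y) \<partial>lam)"
    unfolding eqn by (rule pint_int[OF th bm_A(1)[OF th bmabs]])
  have i2: "AE x in lam. integrable lam (\<lambda>y. F x y)"
    unfolding F_def using fk_int[OF th f] by simp
  have intF: "integrable (lam \<Otimes>\<^sub>M lam) (\<lambda>(x, y). F x y)"
    using PS.Fubini_integrable[OF Fm] i1 i2 by simp
  have "(\<integral>y. (\<integral>x. F x y \<partial>lam) \<partial>lam) = (\<integral>x. (\<integral>y. F x y \<partial>lam) \<partial>lam)"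
    by (rule PS.Fubini_integral[OF intF])
  moreover have "(\<integral>x. F x y \<partial>lam) = pit \<theta> y * ((\<integral>x. kk \<theta> y x \<partial>lam) * f y)" for y
  proof -
    have "(\<integral>x. F x y \<partial>lam) = (\<integral>x. (f y * pit \<theta> y) * kk \<theta> y x \<partial>lam)"
      unfolding F_def by (rule Bochner_Integration.integral_cong) (auto simp: detailed[OF th] mult_ac)
    also have "\<dots> = (f y * pit \<theta> y) * (\<integral>x. kk \<theta> y x \<partial>lam)" by simp
    finally show ?thesis by (simp add: mult_ac)
  qed
  moreover have "(\<integral>y. F x y \<partial>lam) = pit \<theta> x * (\<integral>y. f y * kk \<theta> x y \<partial>lam)" for x
    unfolding F_def by simp
  ultimately show ?thesis unfolding pint_def by simp
qed

lemma stationary: assumes th: "\<theta> \<in> Theta" and f: "bm f" shows "pint \<theta> (P \<theta> f) = pint \<theta> f"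
proof -
  have Peq: "P \<theta> f = (\<lambda>x. (\<integral>y. f y * kk \<theta> x y \<partial>lam) + (f x - (\<integral>y. kk \<theta> x y \<partial>lam) * f x))"
    unfolding P_eq[abs_def] by (simp add: left_diff_distrib)
  show ?thesis unfolding Peq
    using pint_add[OF th bm_A(1)[OF th f] bm_diff[OF f bm_A(2)[OF th f]]] pint_diff[OF th f bm_A(2)[OF th f]]
      st_fubini[OF th f] by simp
qed

end

context MHL begin

lemma bm_iter: assumes "\<theta> \<in> Theta" "bm f" shows "bm ((P \<theta> ^^ n) f)"
  by (induction n) (auto intro: bm_P[OF assms(1)] assms(2))

lemma iter_minus_const: assumes th: "\<theta> \<in> Theta" and g: "bm g"
  shows "(P \<theta> ^^ n) (\<lambda>x. g x - c) = (\<lambda>x. (P \<theta> ^^ n) g x - c)"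
proof (induction n)
  case 0 show ?case by simp
next
  case (Suc n)
  have "(P \<theta> ^^ Suc n) (\<lambda>x. g x - c) = P \<theta> (\<lambda>x. (P \<theta> ^^ n) g x - c)" using Suc by simp
  also have "\<dots> = (\<lambda>x. P \<theta> ((P \<theta> ^^ n) g) x - P \<theta> (\<lambda>x. c) x)"
    by (rule ext, rule P_diff[OF th bm_iter[OF th g] bm_const])
  finally show ?case by (simp add: P_const)
qed

lemma iter_pint: assumes "\<theta> \<in> Theta" "bm g" shows "pint \<theta> ((P \<theta> ^^ n) g) = pint \<theta> g"
  by (induction n) (simp_all add: stationary[OF assms(1) bm_iter[OF assms]])

lemma iter_bound: assumes th: "\<theta> \<in> Theta" and g: "bm g" and B: "\<And>x. \<bar>g x\<bar> \<le> B" and z: "pint \<theta> g = 0"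
  shows "\<bar>(P \<theta> ^^ n) g x\<bar> \<le> (1 - eps) ^ n * B"
proof (induction n arbitrary: x)
  case (0 x) then show ?case using B by simp
next
  case (Suc n x)
  have "\<bar>P \<theta> ((P \<theta> ^^ n) g) x\<bar> \<le> (1 - eps) * ((1 - eps) ^ n * B)"
    by (rule contraction[OF th bm_iter[OF th g] Suc]) (simp add: iter_pint[OF th g] z)
  then show ?case by (simp add: mult.assoc)
qed

lemma eps_r: "0 \<le> 1 - eps" "1 - eps < 1" "norm (1 - eps) < 1" using eps by auto

lemma geo_tail: "(\<Sum>n. (1 - eps) ^ (n + N) * B) = (1 - eps) ^ N * B / eps"
proof -
  have "(\<Sum>n. (1 - eps) ^ (n + N) * B) = (\<Sum>n. ((1 - eps) ^ N * B) * (1 - eps) ^ n)"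
    by (simp add: power_add mult_ac)
  also have "\<dots> = ((1 - eps) ^ N * B) * (\<Sum>n. (1 - eps) ^ n)"
    by (rule suminf_mult[OF summable_geometric[OF eps_r(3)]])
  also have "\<dots> = (1 - eps) ^ N * B / eps" using suminf_geometric[OF eps_r(3)] by simp
  finally show ?thesis .
qed

lemma geo_summable: "summable (\<lambda>n. (1 - eps) ^ (n + N) * B)"
proof -
  have "summable (\<lambda>n. ((1 - eps) ^ N * B) * (1 - eps) ^ n)"
    by (rule summable_mult[OF summable_geometric[OF eps_r(3)]])
  then show ?thesis by (simp add: power_add mult_ac)
qed

lemma suminf_abs_le: fixes f :: "nat \<Rightarrow> real"
  assumes "\<And>n. \<bar>f n\<bar> \<le> g n" "summable g" shows "summable f" "\<bar>suminf f\<bar> \<le> suminf g"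
proof -
  show sf: "summable f" by (rule summable_comparison_test'[OF assms(2)]) (use assms(1) in simp)
  have "suminf f \<le> suminf g" by (rule suminf_le[OF _ sf assms(2)]) (use assms(1) abs_le_D1 in blast)
  moreover have "suminf (\<lambda>n. - f n) \<le> suminf g"
    by (rule suminf_le[OF _ summable_minus[OF sf] assms(2)]) (use assms(1) abs_le_D2 in blast)
  ultimately show "\<bar>suminf f\<bar> \<le> suminf g" using suminf_minus[OF sf] by linarith
qed

lemma poisson_real:
  assumes th: "\<theta> \<in> Theta" and g: "bm g" and B: "\<And>x. \<bar>g x\<bar> \<le> B" and z: "pint \<theta> g = 0"
  defines "u \<equiv> \<lambda>x. \<Sum>n. (P \<theta> ^^ n) g x"
  shows "\<And>x. summable (\<lambda>n. (P \<theta> ^^ n) g x)"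
    and "\<And>x N. \<bar>u x - (\<Sum>n<N. (P \<theta> ^^ n) g x)\<bar> \<le> (1 - eps) ^ N * B / eps"
    and "\<And>x. \<bar>u x\<bar> \<le> B / eps"
    and "bm u"
    and "\<And>x. u x - P \<theta> u x = g x"
    and "pint \<theta> u = 0"
proof -
  let ?G = "\<lambda>n. (P \<theta> ^^ n) g"
  have Gb0: "\<bar>?G n x\<bar> \<le> (1 - eps) ^ n * B" for n x by (rule iter_bound[OF th g B z])
  have sG: "summable (\<lambda>n. ?G n x)" for x
    using suminf_abs_le(1)[of "\<lambda>n. ?G n x" "\<lambda>n. (1 - eps) ^ (n + 0) * B"] Gb0 geo_summable[of 0 B] by simp
  then show "\<And>x. summable (\<lambda>n. (P \<theta> ^^ n) g x)" .
  have tail: "\<bar>u x - (\<Sum>n<N. ?G n x)\<bar> \<le> (1 - eps) ^ N * B / eps" for x N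
  proof -
    have "u x - (\<Sum>n<N. ?G n x) = (\<Sum>n. ?G (n + N) x)"
      unfolding u_def using suminf_split_initial_segment[OF sG[of x], of N] by simp
    also have "\<bar>\<dots>\<bar> \<le> (\<Sum>n. (1 - eps) ^ (n + N) * B)"
      using suminf_abs_le(2)[of "\<lambda>n. ?G (n + N) x" "\<lambda>n. (1 - eps) ^ (n + N) * B"] Gb0 geo_summable by simp
    finally show ?thesis unfolding geo_tail .
  qed
  then show "\<And>x N. \<bar>u x - (\<Sum>n<N. (P \<theta> ^^ n) g x)\<bar> \<le> (1 - eps) ^ N * B / eps" .
  show ub: "\<bar>u x\<bar> \<le> B / eps" for x using tail[of x 0] by simp
  have bmG: "bm (?G n)" for n by (rule bm_iter[OF th g])
  have um: "u \<in> borel_measurable lam" unfolding u_def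
    using bmG unfolding bm_def by (intro borel_measurable_suminf) auto
  show bmu: "bm u" unfolding bm_def using um ub by blast
  have PS: "P \<theta> (\<lambda>x. \<Sum>n<N. ?G n x) x = (\<Sum>n<N. ?G (Suc n) x)" for N x
    using P_sum[OF th bmG] by simp
  have conv: "(\<lambda>N. (1 - eps) ^ N * C) \<longlonglongrightarrow> 0" for C
    by (rule tendsto_mult_left_zero[OF LIMSEQ_power_zero[OF eps_r(3)]])
  show "u x - P \<theta> u x = g x" for x
  proof -
    have bnd: "\<bar>u x - P \<theta> u x - g x\<bar> \<le> (1 - eps) ^ N * (B / eps) + ((1 - eps) ^ N * (B / eps) + (1 - eps) ^ N * B)" for N
    proof -
      let ?S = "\<lambda>x. \<Sum>n<N. ?G n x"
      have bmS: "bm ?S" by (rule bm_sum[OF bmG])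
      have d1: "\<bar>P \<theta> u x - P \<theta> ?S x\<bar> \<le> (1 - eps) ^ N * B / eps"
        by (subst P_diff[OF th bmu bmS, symmetric]) (rule P_bound[OF th bm_diff[OF bmu bmS] tail])
      have "?S x - P \<theta> ?S x = - (\<Sum>n<N. ?G (Suc n) x - ?G n x)"
        unfolding PS sum_subtractf by simp
      also have "\<dots> = ?G 0 x - ?G N x" using sum_lessThan_telescope[of "\<lambda>n. ?G n x" N] by simp
      finally have tel: "?S x - P \<theta> ?S x = g x - ?G N x" by simp
      have "u x - P \<theta> u x - g x = (u x - ?S x) - (P \<theta> u x - P \<theta> ?S x) - ?G N x"
        using tel by simp
      then have "\<bar>u x - P \<theta> u x - g x\<bar> \<le> \<bar>u x - ?S x\<bar> + \<bar>P \<theta> u x - P \<theta> ?S x\<bar> + \<bar>?G N x\<bar>"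
        by simp
      moreover have "(1 - eps) ^ N * B / eps = (1 - eps) ^ N * (B / eps)" by simp
      ultimately show ?thesis
        using tail[of x N] d1 Gb0[of N x] by linarith
    qed
    have lim: "(\<lambda>N. (1 - eps) ^ N * (B / eps) + ((1 - eps) ^ N * (B / eps) + (1 - eps) ^ N * B)) \<longlonglongrightarrow> 0 + (0 + 0)"
      by (intro tendsto_add conv)
    have "\<bar>u x - P \<theta> u x - g x\<bar> \<le> 0 + (0 + 0)"
      by (rule LIMSEQ_le_const[OF lim]) (use bnd in blast)
    then show ?thesis by simp
  qed
  show "pint \<theta> u = 0"
  proof -
    have bnd: "\<bar>pint \<theta> u\<bar> \<le> (1 - eps) ^ N * (B / eps)" for N
    proof -
      let ?S = "\<lambda>x. \<Sum>n<N. ?G n x"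
      have bmS: "bm ?S" by (rule bm_sum[OF bmG])
      have "pint \<theta> ?S = 0"
      proof (induction N)
        case 0 then show ?case using pint_const[OF th, of 0] by simp
      next
        case (Suc N)
        have "pint \<theta> (\<lambda>x. \<Sum>n<Suc N. ?G n x) = pint \<theta> (\<lambda>x. \<Sum>n<N. ?G n x) + pint \<theta> (?G N)"
          using pint_add[OF th bm_sum[OF bmG] bmG[of N]] by simp
        then show ?case using Suc iter_pint[OF th g] z by simp
      qed
      then have "pint \<theta> u = pint \<theta> (\<lambda>x. u x - ?S x)" using pint_diff[OF th bmu bmS] by simp
      also have "\<bar>\<dots>\<bar> \<le> (1 - eps) ^ N * B / eps"
        by (rule pint_bound[OF th bm_diff[OF bmu bmS] tail])
      finally show ?thesis by simp
    qed
    have "\<bar>pint \<theta> u\<bar> \<le> 0"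
      by (rule LIMSEQ_le_const[OF conv[of "B / eps"]]) (use bnd in blast)
    then show ?thesis by simp
  qed
qed

lemma solution_bound:
  assumes th: "\<theta> \<in> Theta" and v: "bm v" and w: "bm w" and eq: "\<And>x. v x - P \<theta> v x = w x"
    and Bw: "\<And>x. \<bar>w x\<bar> \<le> Bw"
  shows "\<bar>v x - pint \<theta> v\<bar> \<le> Bw / eps"
proof -
  define c where "c = pint \<theta> v"
  define z where "z x = v x - c" for x
  obtain Bv where Bv: "\<And>x. \<bar>v x\<bar> \<le> Bv" using v unfolding bm_def by auto
  have bmz: "bm z" unfolding z_def by (rule bm_diff[OF v bm_const])
  have pz: "pint \<theta> z = 0" unfolding z_def c_def using pint_diff[OF th v bm_const] pint_const[OF th] by simp
  have zeq: "z x = w x + P \<theta> z x" for x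
    unfolding z_def using P_diff[OF th v bm_const[of c], of x] P_const eq[of x] by simp
  have Bz: "\<bar>z x\<bar> \<le> Bv + \<bar>c\<bar>" for x unfolding z_def using Bv[of x] by simp
  have zb: "\<bar>z x\<bar> \<le> Bw / eps + (1 - eps) ^ N * (Bv + \<bar>c\<bar>)" for N x
  proof (induction N arbitrary: x)
    case (0 x)
    have "0 \<le> Bw" using Bw[of x] by linarith
    then have "0 \<le> Bw / eps" using eps by simp
    then show ?case using Bz[of x] by simp
  next
    case (Suc N x)
    have "\<bar>P \<theta> z x\<bar> \<le> (1 - eps) * (Bw / eps + (1 - eps) ^ N * (Bv + \<bar>c\<bar>))"
      by (rule contraction[OF th bmz Suc pz])
    then have "\<bar>z x\<bar> \<le> Bw + (1 - eps) * (Bw / eps + (1 - eps) ^ N * (Bv + \<bar>c\<bar>))"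
      using zeq[of x] Bw[of x] by linarith
    also have "\<dots> = Bw / eps + (1 - eps) ^ Suc N * (Bv + \<bar>c\<bar>)"
      using eps by (simp add: field_simps)
    finally show ?case .
  qed
  have lim: "(\<lambda>N. Bw / eps + (1 - eps) ^ N * (Bv + \<bar>c\<bar>)) \<longlonglongrightarrow> Bw / eps + 0"
    using LIMSEQ_power_zero[OF eps_r(3)] by (intro tendsto_add tendsto_const tendsto_mult_left_zero)
  have "\<bar>z x\<bar> \<le> Bw / eps + 0"
    by (rule LIMSEQ_le_const[OF lim]) (use zb in blast)
  then show ?thesis unfolding z_def c_def by simp
qed

end

context MHL begin

abbreviation "HH \<theta> x \<equiv> Hfun Xs x \<theta>"
definition "gc \<theta> i x = Hfun Xs x \<theta> $ i - hmean lam p Xs \<theta> $ i"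
definition "uc \<theta> i x = (\<Sum>n. (P \<theta> ^^ n) (gc \<theta> i) x)"

lemma Hc_eq: "Hfun Xs x \<theta> $ i = \<theta> $ i * (indicator (Xs i) x - (\<Sum>j\<in>UNIV. \<theta> $ j * indicator (Xs j) x))"
  unfolding Hfun_def by (simp add: cell_sum[symmetric])

lemma Hc_bound: assumes "\<theta> \<in> Theta" shows "\<bar>Hfun Xs x \<theta> $ i\<bar> \<le> 1"
proof -
  have a: "0 < \<theta> $ i" "\<theta> $ i < 1" "0 < \<theta> $ cellidx Xs x" "\<theta> $ cellidx Xs x < 1"
    using Theta_pos[OF assms] Theta_le1[OF assms] by auto
  have "\<bar>indicator (Xs i) x - \<theta> $ cellidx Xs x\<bar> \<le> 1" using a by (auto simp: indicator_def)
  then have "\<bar>\<theta> $ i * (indicator (Xs i) x - \<theta> $ cellidx Xs x)\<bar> \<le> 1 * 1"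
    unfolding abs_mult using a by (intro mult_mono) auto
  then show ?thesis unfolding Hfun_def by simp
qed

lemma bm_Hc: assumes "\<theta> \<in> Theta" shows "bm (\<lambda>x. Hfun Xs x \<theta> $ i)"
proof -
  have "(\<lambda>x. Hfun Xs x \<theta> $ i) \<in> borel_measurable lam" unfolding Hc_eq by measurable
  then show ?thesis unfolding bm_def using Hc_bound[OF assms] by blast
qed

lemma hmean_comp: assumes th: "\<theta> \<in> Theta"
  shows "hmean lam p Xs \<theta> $ i = pint \<theta> (\<lambda>x. Hfun Xs x \<theta> $ i)"
proof -
  have e: "pit \<theta> x *\<^sub>R Hfun Xs x \<theta> = (\<Sum>j\<in>UNIV. (pit \<theta> x * Hfun Xs x \<theta> $ j) *\<^sub>R axis j 1)" for x
  proof -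
    have "pit \<theta> x *\<^sub>R Hfun Xs x \<theta> = pit \<theta> x *\<^sub>R (\<Sum>j\<in>UNIV. (Hfun Xs x \<theta> $ j) *\<^sub>R axis j 1)"
      using basis_expansion[of "Hfun Xs x \<theta>"] by (simp add: scalar_mult_eq_scaleR)
    also have "\<dots> = (\<Sum>j\<in>UNIV. (pit \<theta> x * Hfun Xs x \<theta> $ j) *\<^sub>R axis j 1)"
      by (simp add: scaleR_sum_right)
    finally show ?thesis .
  qed
  have ints: "integrable lam (\<lambda>x. (pit \<theta> x * Hfun Xs x \<theta> $ j) *\<^sub>R (axis j 1 :: real^'d))" for j
    using pint_int[OF th bm_Hc[OF th]] by simp
  have "hmean lam p Xs \<theta> = (\<Sum>j\<in>UNIV. (\<integral>x. (pit \<theta> x * Hfun Xs x \<theta> $ j) *\<^sub>R (axis j 1 :: real^'d) \<partial>lam))"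
    unfolding hmean_def e by (rule Bochner_Integration.integral_sum, rule ints)
  also have "\<dots> = (\<Sum>j\<in>UNIV. pint \<theta> (\<lambda>x. Hfun Xs x \<theta> $ j) *\<^sub>R (axis j 1 :: real^'d))"
    unfolding pint_def by (intro sum.cong refl integral_scaleR_left pint_int[OF th bm_Hc[OF th]])
  finally show ?thesis by (simp add: axis_def if_distrib cong: if_cong)
qed

lemma hmean_bound: assumes "\<theta> \<in> Theta" shows "\<bar>hmean lam p Xs \<theta> $ i\<bar> \<le> 1"
  unfolding hmean_comp[OF assms] by (rule pint_bound[OF assms bm_Hc[OF assms] Hc_bound[OF assms]])

lemma bm_gc: assumes "\<theta> \<in> Theta" shows "bm (gc \<theta> i)"
  unfolding gc_def[abs_def] by (rule bm_diff[OF bm_Hc[OF assms] bm_const])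

lemma gc_bound: assumes "\<theta> \<in> Theta" shows "\<bar>gc \<theta> i x\<bar> \<le> 2"
  unfolding gc_def using Hc_bound[OF assms, of x i] hmean_bound[OF assms, of i] by linarith

lemma pint_gc: assumes "\<theta> \<in> Theta" shows "pint \<theta> (gc \<theta> i) = 0"
  unfolding gc_def[abs_def] pint_diff[OF assms bm_Hc[OF assms] bm_const] pint_const[OF assms]
  hmean_comp[OF assms] by simp

lemma uc_props: assumes th: "\<theta> \<in> Theta"
  shows "bm (uc \<theta> i)" "\<And>x. \<bar>uc \<theta> i x\<bar> \<le> 2 / eps" "\<And>x. uc \<theta> i x - P \<theta> (uc \<theta> i) x = gc \<theta> i x"
    "pint \<theta> (uc \<theta> i) = 0"
  using poisson_real(3-6)[OF th bm_gc[OF th] gc_bound[OF th] pint_gc[OF th]] unfolding uc_def[abs_def] by auto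

lemma MHvec_pow: "(MH_vec lam p Xs q \<theta> ^^ n) F x $ i = (P \<theta> ^^ n) (\<lambda>y. F y $ i) x"
proof (induction n arbitrary: x)
  case 0 then show ?case by simp
next
  case (Suc n x)
  have "(MH_vec lam p Xs q \<theta> ^^ Suc n) F x $ i = P \<theta> (\<lambda>y. (MH_vec lam p Xs q \<theta> ^^ n) F y $ i) x"
    by (simp add: MH_vec_def)
  also have "(\<lambda>y. (MH_vec lam p Xs q \<theta> ^^ n) F y $ i) = (P \<theta> ^^ n) (\<lambda>y. F y $ i)"
    using Suc by (intro ext) simp
  finally show ?case by simp
qed

lemma Hterm_comp: assumes th: "\<theta> \<in> Theta"
  shows "Hterm lam p Xs q \<theta> n x $ i = (P \<theta> ^^ n) (gc \<theta> i) x"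
  unfolding Hterm_def gc_def[abs_def] iter_minus_const[OF th bm_Hc[OF th]]
  by (simp add: MHvec_pow)

lemma Hterm_norm: assumes th: "\<theta> \<in> Theta"
  shows "norm (Hterm lam p Xs q \<theta> n x) \<le> real CARD('d) * ((1 - eps) ^ n * 2)"
proof -
  have "norm (Hterm lam p Xs q \<theta> n x) \<le> (\<Sum>i\<in>UNIV. \<bar>Hterm lam p Xs q \<theta> n x $ i\<bar>)"
    by (rule norm_le_l1_cart)
  also have "\<dots> \<le> (\<Sum>i\<in>(UNIV::'d set). (1 - eps) ^ n * 2)"
    unfolding Hterm_comp[OF th]
    by (rule sum_mono) (rule iter_bound[OF th bm_gc[OF th] gc_bound[OF th] pint_gc[OF th]])
  finally show ?thesis by simp
qed

lemma Hterm_summable: assumes th: "\<theta> \<in> Theta"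
  shows "summable (\<lambda>n. Hterm lam p Xs q \<theta> n x)"
proof -
  have "summable (\<lambda>n. (real CARD('d) * 2) * (1 - eps) ^ n)"
    by (rule summable_mult[OF summable_geometric[OF eps_r(3)]])
  then show ?thesis
    by (rule summable_comparison_test') (use Hterm_norm[OF th] in \<open>simp add: mult_ac\<close>)
qed

lemma Hhat_comp: assumes th: "\<theta> \<in> Theta" shows "Hhat lam p Xs q \<theta> x $ i = uc \<theta> i x"
  unfolding Hhat_def uc_def bounded_linear.suminf[OF bounded_linear_vec_nth Hterm_summable[OF th]]
  Hterm_comp[OF th] ..

lemma Hhat_comp': assumes th: "\<theta> \<in> Theta" shows "(\<lambda>y. Hhat lam p Xs q \<theta> y $ i) = uc \<theta> i"
  using Hhat_comp[OF th] by auto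

lemma MHvec_Hhat: assumes th: "\<theta> \<in> Theta"
  shows "MH_vec lam p Xs q \<theta> (Hhat lam p Xs q \<theta>) x $ i = P \<theta> (uc \<theta> i) x"
  unfolding MH_vec_def using Hhat_comp'[OF th] by simp

lemma part1: assumes th: "\<theta> \<in> Theta"
  shows "uniform_limit UNIV (\<lambda>N x. \<Sum>n<N. Hterm lam p Xs q \<theta> n x) (Hhat lam p Xs q \<theta>) sequentially"
    and "\<And>x. Hhat lam p Xs q \<theta> x - MH_vec lam p Xs q \<theta> (Hhat lam p Xs q \<theta>) x
               = Hfun Xs x \<theta> - hmean lam p Xs \<theta>"
proof -
  have e: "Hhat lam p Xs q \<theta> = (\<lambda>x. \<Sum>n. Hterm lam p Xs q \<theta> n x)" by (rule ext) (simp add: Hhat_def)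
  show "uniform_limit UNIV (\<lambda>N x. \<Sum>n<N. Hterm lam p Xs q \<theta> n x) (Hhat lam p Xs q \<theta>) sequentially"
    unfolding e
    by (rule Weierstrass_m_test[OF Hterm_norm[OF th]])
       (rule summable_mult[OF summable_mult2[OF summable_geometric[OF eps_r(3)]]])
  show "Hhat lam p Xs q \<theta> x - MH_vec lam p Xs q \<theta> (Hhat lam p Xs q \<theta>) x
               = Hfun Xs x \<theta> - hmean lam p Xs \<theta>" for x
    unfolding vec_eq_iff
    using uc_props(3)[OF th] Hhat_comp[OF th] MHvec_Hhat[OF th] by (simp add: gc_def)
qed

lemma uc_bound: assumes th: "\<theta> \<in> Theta" shows "\<bar>uc \<theta> i x\<bar> \<le> 2 / eps"
  by (rule uc_props(2)[OF th])

lemma part2: "\<exists>B. \<forall>\<theta>\<in>Theta. \<forall>x. norm (Hhat lam p Xs q \<theta> x) \<le> B"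
proof (intro exI ballI allI)
  fix \<theta> :: "real^'d" and x assume th: "\<theta> \<in> Theta"
  have "norm (Hhat lam p Xs q \<theta> x) \<le> (\<Sum>i\<in>UNIV. \<bar>Hhat lam p Xs q \<theta> x $ i\<bar>)"
    by (rule norm_le_l1_cart)
  also have "\<dots> \<le> (\<Sum>i\<in>(UNIV::'d set). 2 / eps)"
    unfolding Hhat_comp[OF th] by (rule sum_mono) (rule uc_bound[OF th])
  finally show "norm (Hhat lam p Xs q \<theta> x) \<le> real CARD('d) * (2 / eps)" by simp
qed

end

lemma minlip_mul_aux: fixes c u v :: real assumes "0 \<le> c" "0 < u" "u \<le> v"
  shows "\<bar>min 1 (c * u) - min 1 (c * v)\<bar> \<le> (v - u) / v"
proof -
  have cu: "c * u \<le> c * v" using assms by (simp add: mult_left_mono)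
  have "min 1 (c * v) - min 1 (c * u) \<le> (v - u) / v"
  proof (cases "c * v \<le> 1")
    case True
    have "c \<le> 1 / v" using True assms by (simp add: field_simps)
    then have "c * (v - u) \<le> (1 / v) * (v - u)" using assms by (intro mult_right_mono) auto
    moreover have "(1 / v) * (v - u) = (v - u) / v" by simp
    moreover have "c * (v - u) = c * v - c * u" by (simp add: right_diff_distrib)
    ultimately show ?thesis using True cu by simp
  next
    case False
    then have c: "1 / v < c" using assms by (simp add: field_simps)
    show ?thesis
    proof (cases "c * u \<le> 1")
      case True
      have "u / v \<le> c * u" using c assms by (simp add: field_simps)
      moreover have "(v - u) / v = 1 - u / v" using assms by (simp add: field_simps)
      ultimately show ?thesis using False True by simp
    next
      case False2: False
      then show ?thesis using False assms by simp
    qed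
  qed
  moreover have "0 \<le> min 1 (c * v) - min 1 (c * u)" using cu by linarith
  ultimately show ?thesis by simp
qed

lemma minlip_mul: fixes c u v :: real assumes "0 \<le> c" "0 < u" "0 < v"
  shows "\<bar>min 1 (c * u) - min 1 (c * v)\<bar> \<le> \<bar>u - v\<bar> / max u v"
proof (cases "u \<le> v")
  case True then show ?thesis using minlip_mul_aux[OF assms(1,2) True] by (simp add: max_def)
next
  case False
  then have "v \<le> u" by simp
  then show ?thesis using minlip_mul_aux[OF assms(1,3), of u] False by (simp add: max_def abs_minus_commute)
qed

lemma minlip_div_aux: fixes c u v :: real assumes "0 \<le> c" "0 < u" "u \<le> v"
  shows "\<bar>min 1 (c / u) - min 1 (c / v)\<bar> \<le> (v - u) / v"
proof -
  have cu: "c / v \<le> c / u" using assms by (simp add: divide_left_mono)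
  have "min 1 (c / u) - min 1 (c / v) \<le> (v - u) / v"
  proof (cases "c / u \<le> 1")
    case True
    have "c / u - c / v = (c / u) * ((v - u) / v)" using assms by (simp add: field_simps)
    also have "\<dots> \<le> 1 * ((v - u) / v)" using True assms by (intro mult_right_mono) auto
    finally show ?thesis using True cu by simp
  next
    case False
    then have c: "u < c" using assms by (simp add: field_simps)
    show ?thesis
    proof (cases "c / v \<le> 1")
      case True
      have "u / v \<le> c / v" using c assms by (simp add: divide_right_mono)
      moreover have "(v - u) / v = 1 - u / v" using assms by (simp add: field_simps)
      ultimately show ?thesis using False True by simp
    next
      case False2: False
      then show ?thesis using False assms by simp
    qed
  qed
  moreover have "0 \<le> min 1 (c / u) - min 1 (c / v)" using cu by linarith
  ultimately show ?thesis by simp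
qed

lemma minlip_div: fixes c u v :: real assumes "0 \<le> c" "0 < u" "0 < v"
  shows "\<bar>min 1 (c / u) - min 1 (c / v)\<bar> \<le> \<bar>u - v\<bar> / max u v"
proof (cases "u \<le> v")
  case True then show ?thesis using minlip_div_aux[OF assms(1,2) True] by (simp add: max_def)
next
  case False
  then have "v \<le> u" by simp
  then show ?thesis using minlip_div_aux[OF assms(1,3), of u] False by (simp add: max_def abs_minus_commute)
qed


lemma tri2: fixes a b c t :: real shows "\<bar>a - b\<bar> \<le> t \<Longrightarrow> \<bar>b - c\<bar> \<le> t \<Longrightarrow> \<bar>a - c\<bar> \<le> 2 * t"
  by linarith

context MHL begin

definition "mm \<theta> \<theta>' = Min (range (\<lambda>i. min (\<theta> $ i) (\<theta>' $ i)))"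

lemma mm: fixes \<theta> \<theta>' :: "real^'d" assumes "\<theta> \<in> Theta" "\<theta>' \<in> Theta"
  shows "0 < mm \<theta> \<theta>'" "mm \<theta> \<theta>' < 1" "\<And>i. mm \<theta> \<theta>' \<le> \<theta> $ i" "\<And>i. mm \<theta> \<theta>' \<le> \<theta>' $ i"
proof -
  have "mm \<theta> \<theta>' \<in> range (\<lambda>i. min (\<theta> $ i) (\<theta>' $ i))" unfolding mm_def by (rule Min_in) auto
  then obtain j where j: "mm \<theta> \<theta>' = min (\<theta> $ j) (\<theta>' $ j)" by auto
  show "0 < mm \<theta> \<theta>'" unfolding j
    using Theta_pos[OF assms(1)] Theta_pos[OF assms(2)] by auto
  show "mm \<theta> \<theta>' < 1" unfolding j
    using Theta_le1[OF assms(1), of j] by (simp add: min_def)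
  have "mm \<theta> \<theta>' \<le> min (\<theta> $ i) (\<theta>' $ i)" for i unfolding mm_def by (rule Min_le) auto
  then show "\<And>i. mm \<theta> \<theta>' \<le> \<theta> $ i" "\<And>i. mm \<theta> \<theta>' \<le> \<theta>' $ i"
    by (meson order_trans min.cobounded1 min.cobounded2)+
qed

lemma comp_le: "\<bar>(\<theta>::real^'d) $ i - (\<theta>'::real^'d) $ i\<bar> \<le> norm (\<theta> - \<theta>')"
  using component_le_norm_cart[of "\<theta> - \<theta>'" i] by simp

lemma comp_le_t: fixes \<theta> \<theta>' :: "real^'d" assumes "\<theta> \<in> Theta" "\<theta>' \<in> Theta"
  shows "\<bar>\<theta> $ i - \<theta>' $ i\<bar> / max (\<theta> $ i) (\<theta>' $ i) \<le> norm (\<theta> - \<theta>') / mm \<theta> \<theta>'"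
proof -
  have "mm \<theta> \<theta>' \<le> max (\<theta> $ i) (\<theta>' $ i)" using mm(3)[OF assms, of i] by simp
  then show ?thesis using mm(1)[OF assms] comp_le[of \<theta> i \<theta>']
    by (intro frac_le) auto
qed

lemma delta_le_t: fixes \<theta> \<theta>' :: "real^'d" assumes "\<theta> \<in> Theta" "\<theta>' \<in> Theta"
  shows "norm (\<theta> - \<theta>') \<le> norm (\<theta> - \<theta>') / mm \<theta> \<theta>'"
  using mm(1,2)[OF assms] mult_left_le[of "mm \<theta> \<theta>'" "norm (\<theta> - \<theta>')"] by (simp add: le_divide_eq)

lemma acc_lip: assumes th: "\<theta> \<in> Theta" and th': "\<theta>' \<in> Theta"
  shows "\<bar>MH_accept lam p Xs \<theta> x y - MH_accept lam p Xs \<theta>' x y\<bar> \<le> 2 * (norm (\<theta> - \<theta>') / mm \<theta> \<theta>')"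
proof -
  let ?i = "cellidx Xs x" and ?j = "cellidx Xs y" and ?t = "norm (\<theta> - \<theta>') / mm \<theta> \<theta>'"
  obtain c0 where c0: "c0 > 0" "\<And>x. c0 \<le> p x" using A1_inf by auto
  have px: "p x > 0" and py: "p y \<ge> 0" using c0 p_nonneg[of y] by (auto intro: less_le_trans)
  define c where "c = p y / p x"
  have c: "0 \<le> c" unfolding c_def using px py by simp
  have r: "pit \<phi> y / pit \<phi> x = (c * \<phi> $ ?i) / \<phi> $ ?j" if "\<phi> \<in> Theta" for \<phi>
    unfolding pit_eq[OF that] c_def using Z_pos[OF that] Theta_pos[OF that] px by (simp add: field_simps)
  have p1: "0 < \<theta> $ k" "0 < \<theta>' $ k" for k using Theta_pos[OF th] Theta_pos[OF th'] by auto
  have s1: "\<bar>min 1 ((c * \<theta> $ ?i) / \<theta> $ ?j) - min 1 ((c * \<theta>' $ ?i) / \<theta> $ ?j)\<bar> \<le> ?t"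
  proof -
    have c': "0 \<le> c / \<theta> $ ?j" using c p1(1)[of ?j] by simp
    have "\<bar>min 1 ((c / \<theta> $ ?j) * \<theta> $ ?i) - min 1 ((c / \<theta> $ ?j) * \<theta>' $ ?i)\<bar>
        \<le> \<bar>\<theta> $ ?i - \<theta>' $ ?i\<bar> / max (\<theta> $ ?i) (\<theta>' $ ?i)"
      by (rule minlip_mul[OF c' p1(1) p1(2)])
    also have "\<dots> \<le> ?t" by (rule comp_le_t[OF th th'])
    finally have "\<bar>min 1 ((c / \<theta> $ ?j) * \<theta> $ ?i) - min 1 ((c / \<theta> $ ?j) * \<theta>' $ ?i)\<bar> \<le> ?t" .
    then show ?thesis by (simp add: mult.commute)
  qed
  have c'': "0 \<le> c * \<theta>' $ ?i" using c p1(2)[of ?i] by simp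
  have "\<bar>min 1 ((c * \<theta>' $ ?i) / \<theta> $ ?j) - min 1 ((c * \<theta>' $ ?i) / \<theta>' $ ?j)\<bar>
      \<le> \<bar>\<theta> $ ?j - \<theta>' $ ?j\<bar> / max (\<theta> $ ?j) (\<theta>' $ ?j)"
    by (rule minlip_div[OF c'' p1(1) p1(2)])
  also have "\<dots> \<le> ?t" by (rule comp_le_t[OF th th'])
  finally have s2: "\<bar>min 1 ((c * \<theta>' $ ?i) / \<theta> $ ?j) - min 1 ((c * \<theta>' $ ?i) / \<theta>' $ ?j)\<bar> \<le> ?t" .
  show ?thesis unfolding acc_eq r[OF th] r[OF th'] by (rule tri2[OF s1 s2])
qed

lemma kk_lip: assumes th: "\<theta> \<in> Theta" and th': "\<theta>' \<in> Theta"
  shows "\<bar>kk \<theta> x y - kk \<theta>' x y\<bar> \<le> 2 * (norm (\<theta> - \<theta>') / mm \<theta> \<theta>') * q x y"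
proof -
  have "\<bar>kk \<theta> x y - kk \<theta>' x y\<bar> = \<bar>MH_accept lam p Xs \<theta> x y - MH_accept lam p Xs \<theta>' x y\<bar> * q x y"
    unfolding kk_def using q_nonneg[of x y] by (simp add: abs_mult left_diff_distrib[symmetric])
  also have "\<dots> \<le> 2 * (norm (\<theta> - \<theta>') / mm \<theta> \<theta>') * q x y"
    by (rule mult_right_mono[OF acc_lip[OF th th'] q_nonneg])
  finally show ?thesis .
qed

lemma P_lip: assumes th: "\<theta> \<in> Theta" and th': "\<theta>' \<in> Theta" and f: "bm f" and B: "\<And>x. \<bar>f x\<bar> \<le> B"
  shows "\<bar>P \<theta> f x - P \<theta>' f x\<bar> \<le> 4 * (norm (\<theta> - \<theta>') / mm \<theta> \<theta>') * B"
proof -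
  let ?t = "norm (\<theta> - \<theta>') / mm \<theta> \<theta>'"
  have B0: "0 \<le> B" using B[of x] by linarith
  have t0: "0 \<le> ?t" using mm(1)[OF th th'] by simp
  have i1: "integrable lam (\<lambda>y. f y * kk \<theta> x y - f y * kk \<theta>' x y)"
    using fk_int[OF th f] fk_int[OF th' f] by simp
  have i2: "integrable lam (\<lambda>y. kk \<theta> x y - kk \<theta>' x y)"
    using kk_int[OF th] kk_int[OF th'] by simp
  have iq: "integrable lam (\<lambda>y. (2 * ?t * B) * q x y)" "integrable lam (\<lambda>y. (2 * ?t) * q x y)"
    using q_int[of x] by simp_all
  have a1: "\<bar>(\<integral>y. f y * kk \<theta> x y \<partial>lam) - (\<integral>y. f y * kk \<theta>' x y \<partial>lam)\<bar> \<le> 2 * ?t * B"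
  proof -
    have "\<bar>(\<integral>y. f y * kk \<theta> x y \<partial>lam) - (\<integral>y. f y * kk \<theta>' x y \<partial>lam)\<bar>
        = \<bar>\<integral>y. f y * kk \<theta> x y - f y * kk \<theta>' x y \<partial>lam\<bar>"
      using Bochner_Integration.integral_diff[OF fk_int[OF th f] fk_int[OF th' f]] by simp
    also have "\<dots> \<le> (\<integral>y. \<bar>f y * kk \<theta> x y - f y * kk \<theta>' x y\<bar> \<partial>lam)" by (rule integral_abs_bound)
    also have "\<dots> \<le> (\<integral>y. (2 * ?t * B) * q x y \<partial>lam)"
    proof (rule integral_mono[OF integrable_abs[OF i1] iq(1)])
      fix y
      have "\<bar>f y * kk \<theta> x y - f y * kk \<theta>' x y\<bar> = \<bar>f y\<bar> * \<bar>kk \<theta> x y - kk \<theta>' x y\<bar>"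
        by (simp add: abs_mult right_diff_distrib[symmetric])
      also have "\<dots> \<le> B * (2 * ?t * q x y)"
        using B[of y] kk_lip[OF th th', of x y] B0 by (intro mult_mono) auto
      finally show "\<bar>f y * kk \<theta> x y - f y * kk \<theta>' x y\<bar> \<le> (2 * ?t * B) * q x y" by (simp add: mult_ac)
    qed
    also have "\<dots> = 2 * ?t * B" using q_dens[of x] by simp
    finally show ?thesis .
  qed
  have a2: "\<bar>(\<integral>y. kk \<theta> x y \<partial>lam) - (\<integral>y. kk \<theta>' x y \<partial>lam)\<bar> \<le> 2 * ?t"
  proof -
    have "\<bar>(\<integral>y. kk \<theta> x y \<partial>lam) - (\<integral>y. kk \<theta>' x y \<partial>lam)\<bar> = \<bar>\<integral>y. kk \<theta> x y - kk \<theta>' x y \<partial>lam\<bar>"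
      using Bochner_Integration.integral_diff[OF kk_int[OF th] kk_int[OF th']] by simp
    also have "\<dots> \<le> (\<integral>y. \<bar>kk \<theta> x y - kk \<theta>' x y\<bar> \<partial>lam)" by (rule integral_abs_bound)
    also have "\<dots> \<le> (\<integral>y. (2 * ?t) * q x y \<partial>lam)"
      by (rule integral_mono[OF integrable_abs[OF i2] iq(2)]) (use kk_lip[OF th th'] in simp)
    also have "\<dots> = 2 * ?t" using q_dens[of x] by simp
    finally show ?thesis .
  qed
  have a3: "\<bar>((\<integral>y. kk \<theta> x y \<partial>lam) - (\<integral>y. kk \<theta>' x y \<partial>lam)) * f x\<bar> \<le> 2 * ?t * B"
    unfolding abs_mult using a2 B[of x] B0 by (intro mult_mono) auto
  have "P \<theta> f x - P \<theta>' f x = ((\<integral>y. f y * kk \<theta> x y \<partial>lam) - (\<integral>y. f y * kk \<theta>' x y \<partial>lam))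
      - ((\<integral>y. kk \<theta> x y \<partial>lam) - (\<integral>y. kk \<theta>' x y \<partial>lam)) * f x"
    unfolding P_eq by (simp add: algebra_simps)
  then have "\<bar>P \<theta> f x - P \<theta>' f x\<bar> \<le> 2 * ?t * B + 2 * ?t * B"
    using a1 a3 by (smt (verit))
  moreover have "2 * ?t * B + 2 * ?t * B = 4 * ?t * B" by simp
  ultimately show ?thesis by (rule ord_le_eq_trans)
qed

end

context MHL begin

lemma weights_lip: fixes \<theta> \<theta>' :: "real^'d" assumes th: "\<theta> \<in> Theta" and th': "\<theta>' \<in> Theta"
  shows "(\<Sum>i\<in>UNIV. ts $ i * \<bar>1 / (\<theta> $ i * Z \<theta>) - 1 / (\<theta>' $ i * Z \<theta>')\<bar>) \<le> 2 * (norm (\<theta> - \<theta>') / mm \<theta> \<theta>')"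
proof -
  let ?t = "norm (\<theta> - \<theta>') / mm \<theta> \<theta>'"
  define a where "a i = ts $ i / \<theta> $ i" for i
  define a' where "a' i = ts $ i / \<theta>' $ i" for i
  have Z: "Z \<theta> = (\<Sum>i\<in>UNIV. a i)" "Z \<theta>' = (\<Sum>i\<in>UNIV. a' i)" unfolding Z_def a_def a'_def by auto
  have Zp: "0 < Z \<theta>" "0 < Z \<theta>'" using Z_pos th th' by auto
  have p1: "0 < \<theta> $ k" "0 < \<theta>' $ k" "0 < ts $ k" for k using Theta_pos[OF th] Theta_pos[OF th'] A1_ts by auto
  have ap: "0 \<le> a i" "0 \<le> a' i" for i unfolding a_def a'_def using p1 by (auto intro: less_imp_le)
  have t0: "0 \<le> ?t" using mm(1)[OF th th'] by simp
  have ad: "\<bar>a i - a' i\<bar> \<le> a i * ?t" for i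
  proof -
    have "a i - a' i = a i * ((\<theta>' $ i - \<theta> $ i) / \<theta>' $ i)"
      unfolding a_def a'_def using p1[of i] by (simp add: field_simps)
    then have "\<bar>a i - a' i\<bar> = a i * (\<bar>\<theta> $ i - \<theta>' $ i\<bar> / \<theta>' $ i)"
      using ap[of i] p1[of i] by (simp add: abs_mult abs_minus_commute)
    also have "\<dots> \<le> a i * ?t"
    proof (rule mult_left_mono[OF _ ap(1)])
      show "\<bar>\<theta> $ i - \<theta>' $ i\<bar> / \<theta>' $ i \<le> ?t"
        using comp_le[of \<theta> i \<theta>'] mm(1)[OF th th'] mm(4)[OF th th', of i] by (intro frac_le) auto
    qed
    finally show ?thesis .
  qed
  have e: "ts $ i * \<bar>1 / (\<theta> $ i * Z \<theta>) - 1 / (\<theta>' $ i * Z \<theta>')\<bar> = \<bar>a i / Z \<theta> - a' i / Z \<theta>'\<bar>" for i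
  proof -
    have "ts $ i * (1 / (\<theta> $ i * Z \<theta>) - 1 / (\<theta>' $ i * Z \<theta>')) = a i / Z \<theta> - a' i / Z \<theta>'"
      unfolding a_def a'_def using p1[of i] Zp by (simp add: field_simps)
    then show ?thesis using p1[of i] by (metis abs_mult abs_of_pos)
  qed
  have s: "\<bar>a i / Z \<theta> - a' i / Z \<theta>'\<bar> \<le> \<bar>a i - a' i\<bar> / Z \<theta> + a' i * \<bar>1 / Z \<theta> - 1 / Z \<theta>'\<bar>" for i
  proof -
    have "a i / Z \<theta> - a' i / Z \<theta>' = (a i - a' i) / Z \<theta> + a' i * (1 / Z \<theta> - 1 / Z \<theta>')"
      using Zp by (simp add: field_simps)
    moreover have "\<bar>(a i - a' i) / Z \<theta>\<bar> = \<bar>a i - a' i\<bar> / Z \<theta>" using Zp by simp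
    moreover have "\<bar>a' i * (1 / Z \<theta> - 1 / Z \<theta>')\<bar> = a' i * \<bar>1 / Z \<theta> - 1 / Z \<theta>'\<bar>"
      using ap[of i] by (simp add: abs_mult)
    ultimately show ?thesis
      using abs_triangle_ineq[of "(a i - a' i) / Z \<theta>" "a' i * (1 / Z \<theta> - 1 / Z \<theta>')"]
      by (simp add: abs_of_pos[OF Zp(1)])
  qed
  have sumd: "(\<Sum>i\<in>UNIV. \<bar>a i - a' i\<bar>) \<le> Z \<theta> * ?t"
    unfolding Z sum_distrib_right by (rule sum_mono[OF ad])
  have "(\<Sum>i\<in>UNIV. ts $ i * \<bar>1 / (\<theta> $ i * Z \<theta>) - 1 / (\<theta>' $ i * Z \<theta>')\<bar>)
      \<le> (\<Sum>i\<in>UNIV. \<bar>a i - a' i\<bar> / Z \<theta> + a' i * \<bar>1 / Z \<theta> - 1 / Z \<theta>'\<bar>)"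
    unfolding e by (rule sum_mono[OF s])
  also have "\<dots> = (\<Sum>i\<in>UNIV. \<bar>a i - a' i\<bar>) / Z \<theta> + Z \<theta>' * \<bar>1 / Z \<theta> - 1 / Z \<theta>'\<bar>"
    unfolding sum.distrib Z sum_divide_distrib sum_distrib_right by simp
  also have "Z \<theta>' * \<bar>1 / Z \<theta> - 1 / Z \<theta>'\<bar> = \<bar>Z \<theta> - Z \<theta>'\<bar> / Z \<theta>"
  proof -
    have "Z \<theta>' * (1 / Z \<theta> - 1 / Z \<theta>') = (Z \<theta>' - Z \<theta>) / Z \<theta>" using Zp by (simp add: field_simps)
    then show ?thesis using Zp by (metis abs_divide abs_minus_commute abs_mult abs_of_pos)
  qed
  also have "\<bar>Z \<theta> - Z \<theta>'\<bar> \<le> (\<Sum>i\<in>UNIV. \<bar>a i - a' i\<bar>)"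
    unfolding Z sum_subtractf[symmetric] by (rule sum_abs)
  finally have "(\<Sum>i\<in>UNIV. ts $ i * \<bar>1 / (\<theta> $ i * Z \<theta>) - 1 / (\<theta>' $ i * Z \<theta>')\<bar>)
      \<le> (\<Sum>i\<in>UNIV. \<bar>a i - a' i\<bar>) / Z \<theta> + (\<Sum>i\<in>UNIV. \<bar>a i - a' i\<bar>) / Z \<theta>"
    using Zp by (simp add: divide_right_mono)
  also have "\<dots> \<le> (Z \<theta> * ?t) / Z \<theta> + (Z \<theta> * ?t) / Z \<theta>"
    using sumd Zp by (intro add_mono divide_right_mono) auto
  also have "\<dots> = 2 * ?t" using Zp by simp
  finally show ?thesis .
qed

lemma F_bound: assumes f: "bm f" and B: "\<And>x. \<bar>f x\<bar> \<le> B"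
  shows "\<bar>\<integral>x. p x * (indicator (Xs i) x * f x) \<partial>lam\<bar> \<le> B * ts $ i"
proof -
  have i1: "integrable lam (\<lambda>x. p x * (indicator (Xs i) x * f x))" by (rule p_meas_f[OF bm_ind[OF f]])
  have i2: "integrable lam (\<lambda>x. B * (p x * indicator (Xs i) x))"
    using p_meas_f[OF bm_ind[OF bm_const[of 1]], of i] by simp
  have "\<bar>\<integral>x. p x * (indicator (Xs i) x * f x) \<partial>lam\<bar> \<le> (\<integral>x. \<bar>p x * (indicator (Xs i) x * f x)\<bar> \<partial>lam)"
    by (rule integral_abs_bound)
  also have "\<dots> \<le> (\<integral>x. B * (p x * indicator (Xs i) x) \<partial>lam)"
  proof (rule integral_mono[OF integrable_abs[OF i1] i2])
    fix x
    have "\<bar>p x * (indicator (Xs i) x * f x)\<bar> = (p x * indicator (Xs i) x) * \<bar>f x\<bar>"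
      using p_nonneg[of x] by (simp add: abs_mult)
    also have "\<dots> \<le> (p x * indicator (Xs i) x) * B"
      using p_nonneg[of x] B[of x] by (intro mult_left_mono) auto
    finally show "\<bar>p x * (indicator (Xs i) x * f x)\<bar> \<le> B * (p x * indicator (Xs i) x)" by (simp add: mult_ac)
  qed
  also have "\<dots> = B * ts $ i" unfolding ts_int by simp
  finally show ?thesis .
qed

lemma pint_lip: fixes \<theta> \<theta>' :: "real^'d" assumes th: "\<theta> \<in> Theta" and th': "\<theta>' \<in> Theta"
  and f: "bm f" and B: "\<And>x. \<bar>f x\<bar> \<le> B"
  shows "\<bar>pint \<theta> f - pint \<theta>' f\<bar> \<le> 2 * (norm (\<theta> - \<theta>') / mm \<theta> \<theta>') * B"
proof -
  define F where "F i = (\<integral>x. p x * (indicator (Xs i) x * f x) \<partial>lam)" for i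
  have B0: "0 \<le> B" using B[of undefined] by linarith
  have p1: "0 < \<theta> $ k" "0 < \<theta>' $ k" for k using Theta_pos[OF th] Theta_pos[OF th'] by auto
  have Zp: "0 < Z \<theta>" "0 < Z \<theta>'" using Z_pos th th' by auto
  have pf: "pint \<phi> f = (\<Sum>i\<in>UNIV. F i * (1 / (\<phi> $ i * Z \<phi>)))" if "\<phi> \<in> Theta" for \<phi>
    unfolding pint_formula[OF that f] F_def[symmetric] sum_distrib_left
    using Z_pos[OF that] Theta_pos[OF that] by (intro sum.cong refl) (simp add: field_simps)
  have "pint \<theta> f - pint \<theta>' f = (\<Sum>i\<in>UNIV. F i * (1 / (\<theta> $ i * Z \<theta>) - 1 / (\<theta>' $ i * Z \<theta>')))"
    unfolding pf[OF th] pf[OF th'] sum_subtractf[symmetric] by (simp add: right_diff_distrib)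
  also have "\<bar>\<dots>\<bar> \<le> (\<Sum>i\<in>UNIV. \<bar>F i * (1 / (\<theta> $ i * Z \<theta>) - 1 / (\<theta>' $ i * Z \<theta>'))\<bar>)"
    by (rule sum_abs)
  also have "\<dots> \<le> (\<Sum>i\<in>UNIV. B * (ts $ i * \<bar>1 / (\<theta> $ i * Z \<theta>) - 1 / (\<theta>' $ i * Z \<theta>')\<bar>))"
  proof (rule sum_mono)
    fix i
    have "\<bar>F i * (1 / (\<theta> $ i * Z \<theta>) - 1 / (\<theta>' $ i * Z \<theta>'))\<bar> = \<bar>F i\<bar> * \<bar>1 / (\<theta> $ i * Z \<theta>) - 1 / (\<theta>' $ i * Z \<theta>')\<bar>"
      by (rule abs_mult)
    also have "\<dots> \<le> (B * ts $ i) * \<bar>1 / (\<theta> $ i * Z \<theta>) - 1 / (\<theta>' $ i * Z \<theta>')\<bar>"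
      unfolding F_def by (intro mult_right_mono F_bound[OF f B]) auto
    finally show "\<bar>F i * (1 / (\<theta> $ i * Z \<theta>) - 1 / (\<theta>' $ i * Z \<theta>'))\<bar>
        \<le> B * (ts $ i * \<bar>1 / (\<theta> $ i * Z \<theta>) - 1 / (\<theta>' $ i * Z \<theta>')\<bar>)" by (simp add: mult_ac)
  qed
  also have "\<dots> = B * (\<Sum>i\<in>UNIV. ts $ i * \<bar>1 / (\<theta> $ i * Z \<theta>) - 1 / (\<theta>' $ i * Z \<theta>')\<bar>)"
    by (simp add: sum_distrib_left)
  also have "\<dots> \<le> B * (2 * (norm (\<theta> - \<theta>') / mm \<theta> \<theta>'))"
    by (rule mult_left_mono[OF weights_lip[OF th th'] B0])
  finally show ?thesis by (simp add: mult_ac)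
qed

end

lemma Hlip_aux: fixes a b c d I e :: real
  assumes "0 \<le> I" "I \<le> 1" "\<bar>a - b\<bar> \<le> e" "\<bar>c - d\<bar> \<le> e" "0 \<le> c" "c \<le> 1" "0 \<le> b" "b \<le> 1"
  shows "\<bar>a * (I - c) - b * (I - d)\<bar> \<le> 3 * e"
proof -
  have eq: "a * (I - c) - b * (I - d) = (a - b) * I - (a - b) * c - b * (c - d)" by (simp add: algebra_simps)
  have 1: "\<bar>(a - b) * I\<bar> \<le> e * 1" unfolding abs_mult using assms by (intro mult_mono) auto
  have 2: "\<bar>(a - b) * c\<bar> \<le> e * 1" unfolding abs_mult using assms by (intro mult_mono) auto
  have 3: "\<bar>b * (c - d)\<bar> \<le> 1 * e" unfolding abs_mult using assms by (intro mult_mono) auto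
  show ?thesis unfolding eq using 1 2 3 by linarith
qed

context MHL begin

lemma H_lip: fixes \<theta> \<theta>' :: "real^'d" assumes th: "\<theta> \<in> Theta" and th': "\<theta>' \<in> Theta"
  shows "\<bar>Hfun Xs x \<theta> $ i - Hfun Xs x \<theta>' $ i\<bar> \<le> 3 * norm (\<theta> - \<theta>')"
  unfolding Hfun_def vec_lambda_beta
  by (rule Hlip_aux) (use comp_le Theta_pos[OF th] Theta_le1[OF th] Theta_pos[OF th'] Theta_le1[OF th']
      in \<open>auto simp: indicator_def less_imp_le\<close>)

lemma coord_lip: fixes \<theta> \<theta>' :: "real^'d" assumes th: "\<theta> \<in> Theta" and th': "\<theta>' \<in> Theta"
  defines "t \<equiv> norm (\<theta> - \<theta>') / mm \<theta> \<theta>'"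
  shows "\<bar>uc \<theta> i x - uc \<theta>' i x\<bar> \<le> ((8 + 8 / eps) / eps + 4 / eps) * t"
    and "\<bar>P \<theta> (uc \<theta> i) x - P \<theta>' (uc \<theta>' i) x\<bar> \<le> (((8 + 8 / eps) / eps + 4 / eps) + 8) * t"
proof -
  let ?d = "norm (\<theta> - \<theta>')"
  have dt: "?d \<le> t" unfolding t_def by (rule delta_le_t[OF th th'])
  have t0: "0 \<le> t" unfolding t_def using mm(1)[OF th th'] by simp
  let ?H = "\<lambda>x. Hfun Xs x \<theta> $ i" and ?H' = "\<lambda>x. Hfun Xs x \<theta>' $ i"
  have bmH: "bm ?H" "bm ?H'" using bm_Hc th th' by auto
  have hd: "\<bar>hmean lam p Xs \<theta> $ i - hmean lam p Xs \<theta>' $ i\<bar> \<le> 2 * t + 3 * ?d"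
  proof -
    have a: "\<bar>pint \<theta> ?H - pint \<theta>' ?H\<bar> \<le> 2 * t * 1"
      unfolding t_def by (rule pint_lip[OF th th' bmH(1) Hc_bound[OF th]])
    have "\<bar>pint \<theta>' ?H - pint \<theta>' ?H'\<bar> = \<bar>pint \<theta>' (\<lambda>x. ?H x - ?H' x)\<bar>"
      using pint_diff[OF th' bmH] by simp
    also have "\<dots> \<le> 3 * ?d" by (rule pint_bound[OF th' bm_diff[OF bmH] H_lip[OF th th']])
    finally show ?thesis unfolding hmean_comp[OF th] hmean_comp[OF th'] using a by linarith
  qed
  have gd: "\<bar>gc \<theta> i y - gc \<theta>' i y\<bar> \<le> 8 * t" for y
    unfolding gc_def using H_lip[OF th th', of y i] hd dt by linarith
  let ?u = "uc \<theta> i" and ?u' = "uc \<theta>' i"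
  have bmu: "bm ?u" "bm ?u'" using uc_props(1) th th' by auto
  define v where "v y = ?u y - ?u' y" for y
  have bmv: "bm v" unfolding v_def by (rule bm_diff[OF bmu])
  define w where "w y = v y - P \<theta> v y" for y
  have wb: "\<bar>w y\<bar> \<le> 8 * t + 4 * t * (2 / eps)" for y
  proof -
    have "w y = gc \<theta> i y - gc \<theta>' i y + (P \<theta> ?u' y - P \<theta>' ?u' y)"
      unfolding w_def v_def P_diff[OF th bmu] using uc_props(3)[OF th, of i y] uc_props(3)[OF th', of i y]
      by simp
    moreover have "\<bar>P \<theta> ?u' y - P \<theta>' ?u' y\<bar> \<le> 4 * t * (2 / eps)"
      unfolding t_def by (rule P_lip[OF th th' bmu(2) uc_props(2)[OF th']])
    ultimately show ?thesis using gd[of y] by linarith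
  qed
  have bmw: "bm w" unfolding w_def[abs_def] by (rule bm_diff[OF bmv bm_P[OF th bmv]])
  have sb: "\<bar>v x - pint \<theta> v\<bar> \<le> (8 * t + 4 * t * (2 / eps)) / eps"
    by (rule solution_bound[OF th bmv bmw _ wb]) (simp add: w_def)
  have pv: "\<bar>pint \<theta> v\<bar> \<le> 2 * t * (2 / eps)"
  proof -
    have "pint \<theta> v = pint \<theta>' ?u' - pint \<theta> ?u'"
      unfolding v_def[abs_def] pint_diff[OF th bmu] uc_props(4)[OF th] uc_props(4)[OF th'] by simp
    also have "\<bar>\<dots>\<bar> \<le> 2 * t * (2 / eps)"
      using pint_lip[OF th th' bmu(2) uc_props(2)[OF th']] unfolding t_def by (simp add: abs_minus_commute)
    finally show ?thesis .
  qed
  have e1: "(8 * t + 4 * t * (2 / eps)) / eps = ((8 + 8 / eps) / eps) * t" by (simp add: field_simps)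
  have e2: "2 * t * (2 / eps) = (4 / eps) * t" by simp
  have vb: "\<bar>v x\<bar> \<le> ((8 + 8 / eps) / eps + 4 / eps) * t"
    using sb pv unfolding e1 e2 distrib_right by linarith
  then show "\<bar>uc \<theta> i x - uc \<theta>' i x\<bar> \<le> ((8 + 8 / eps) / eps + 4 / eps) * t" unfolding v_def .
  have "P \<theta> ?u x - P \<theta>' ?u' x = v x - (gc \<theta> i x - gc \<theta>' i x)"
    unfolding v_def using uc_props(3)[OF th, of i x] uc_props(3)[OF th', of i x] by linarith
  then show "\<bar>P \<theta> (uc \<theta> i) x - P \<theta>' (uc \<theta>' i) x\<bar> \<le> (((8 + 8 / eps) / eps + 4 / eps) + 8) * t"
    using vb gd[of x] unfolding distrib_right by (smt (verit))
qed

lemma part3: "\<exists>C>0. \<forall>\<theta>\<in>Theta. \<forall>\<theta>'\<in>Theta. \<forall>x.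
          norm (Hhat lam p Xs q \<theta> x - Hhat lam p Xs q \<theta>' x)
          + norm (MH_vec lam p Xs q \<theta> (Hhat lam p Xs q \<theta>) x
                  - MH_vec lam p Xs q \<theta>' (Hhat lam p Xs q \<theta>') x)
          \<le> C * norm (\<theta> - \<theta>') / Min (range (\<lambda>i. min (\<theta>$i) (\<theta>'$i)))"
proof -
  define V where "V = (8 + 8 / eps) / eps + 4 / eps"
  have V0: "0 \<le> V" unfolding V_def using eps by simp
  define C where "C = real CARD('d) * (V + (V + 8))"
  have C0: "C > 0" unfolding C_def using V0 by simp
  show ?thesis
  proof (intro exI[of _ C] conjI C0 ballI allI)
    fix \<theta> \<theta>' :: "real^'d" and x assume th: "\<theta> \<in> Theta" and th': "\<theta>' \<in> Theta"
    define t where "t = norm (\<theta> - \<theta>') / mm \<theta> \<theta>'"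
    have a: "norm (Hhat lam p Xs q \<theta> x - Hhat lam p Xs q \<theta>' x) \<le> real CARD('d) * (V * t)"
    proof -
      have "norm (Hhat lam p Xs q \<theta> x - Hhat lam p Xs q \<theta>' x)
          \<le> (\<Sum>i\<in>UNIV. \<bar>(Hhat lam p Xs q \<theta> x - Hhat lam p Xs q \<theta>' x) $ i\<bar>)" by (rule norm_le_l1_cart)
      also have "\<dots> \<le> (\<Sum>i\<in>(UNIV::'d set). V * t)"
        unfolding vector_minus_component Hhat_comp[OF th] Hhat_comp[OF th'] V_def t_def
        by (rule sum_mono) (rule coord_lip(1)[OF th th'])
      finally show ?thesis by simp
    qed
    have b: "norm (MH_vec lam p Xs q \<theta> (Hhat lam p Xs q \<theta>) x - MH_vec lam p Xs q \<theta>' (Hhat lam p Xs q \<theta>') x)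
        \<le> real CARD('d) * ((V + 8) * t)"
    proof -
      have "norm (MH_vec lam p Xs q \<theta> (Hhat lam p Xs q \<theta>) x - MH_vec lam p Xs q \<theta>' (Hhat lam p Xs q \<theta>') x)
          \<le> (\<Sum>i\<in>UNIV. \<bar>(MH_vec lam p Xs q \<theta> (Hhat lam p Xs q \<theta>) x - MH_vec lam p Xs q \<theta>' (Hhat lam p Xs q \<theta>') x) $ i\<bar>)"
        by (rule norm_le_l1_cart)
      also have "\<dots> \<le> (\<Sum>i\<in>(UNIV::'d set). (V + 8) * t)"
        unfolding vector_minus_component MHvec_Hhat[OF th] MHvec_Hhat[OF th'] V_def t_def
        by (rule sum_mono) (rule coord_lip(2)[OF th th'])
      finally show ?thesis by simp
    qed
    have "C * norm (\<theta> - \<theta>') / Min (range (\<lambda>i. min (\<theta>$i) (\<theta>'$i))) = real CARD('d) * (V * t) + real CARD('d) * ((V + 8) * t)"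
      unfolding mm_def[symmetric] t_def C_def using mm(1)[OF th th'] by (simp add: field_simps)
    then show "norm (Hhat lam p Xs q \<theta> x - Hhat lam p Xs q \<theta>' x)
          + norm (MH_vec lam p Xs q \<theta> (Hhat lam p Xs q \<theta>) x
                  - MH_vec lam p Xs q \<theta>' (Hhat lam p Xs q \<theta>') x)
          \<le> C * norm (\<theta> - \<theta>') / Min (range (\<lambda>i. min (\<theta>$i) (\<theta>'$i)))"
      using a b by linarith
  qed
qed

end

theorem mainTheorem15:
  fixes lam :: "('a::polish_space) measure"
    and p :: "'a \<Rightarrow> real"
    and Xs :: "'d::finite \<Rightarrow> 'a set"
    and q :: "'a \<Rightarrow> 'a \<Rightarrow> real"
  assumes d2: "CARD('d) \<ge> 2"
    and lam_borel: "sets lam = sets borel"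
    and lam_sf: "sigma_finite_measure lam"
    and p_meas: "p \<in> borel_measurable lam"
    and p_nonneg: "\<And>x. 0 \<le> p x"
    and p_int: "integrable lam p"
    and p_one: "(\<integral>x. p x \<partial>lam) = 1"
    and Xs_meas: "\<And>i. Xs i \<in> sets lam"
    and Xs_disj: "\<And>i j. i \<noteq> j \<Longrightarrow> Xs i \<inter> Xs j = {}"
    and Xs_cover: "(\<Union>i. Xs i) = UNIV"
    and A1_inf: "\<exists>c>0. \<forall>x. c \<le> p x"
    and A1_sup: "\<exists>C. \<forall>x. p x \<le> C"
    and A1_ts: "\<And>i. 0 < theta_star lam p Xs $ i"
    and q_meas: "(\<lambda>(x, y). q x y) \<in> borel_measurable (lam \<Otimes>\<^sub>M lam)"
    and q_sym: "\<And>x y. q x y = q y x"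
    and q_nonneg: "\<And>x y. 0 \<le> q x y"
    and q_int: "\<And>x. integrable lam (q x)"
    and q_dens: "\<And>x. (\<integral>y. q x y \<partial>lam) = 1"
    and q_inf: "\<exists>c>0. \<forall>x y. c \<le> q x y"
  shows
    "(\<forall>\<theta>\<in>Theta.
        uniform_limit UNIV (\<lambda>N x. \<Sum>n<N. Hterm lam p Xs q \<theta> n x)
                      (Hhat lam p Xs q \<theta>) sequentially
      \<and> (\<forall>x. Hhat lam p Xs q \<theta> x - MH_vec lam p Xs q \<theta> (Hhat lam p Xs q \<theta>) x
               = Hfun Xs x \<theta> - hmean lam p Xs \<theta>))
     \<and> (\<exists>B. \<forall>\<theta>\<in>Theta. \<forall>x. norm (Hhat lam p Xs q \<theta> x) \<le> B)
     \<and> (\<exists>C>0. \<forall>\<theta>\<in>Theta. \<forall>\<theta>'\<in>Theta. \<forall>x.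
          norm (Hhat lam p Xs q \<theta> x - Hhat lam p Xs q \<theta>' x)
          + norm (MH_vec lam p Xs q \<theta> (Hhat lam p Xs q \<theta>) x
                  - MH_vec lam p Xs q \<theta>' (Hhat lam p Xs q \<theta>') x)
          \<le> C * norm (\<theta> - \<theta>') / Min (range (\<lambda>i. min (\<theta>$i) (\<theta>'$i))))"
  proof -
  interpret MHL lam p Xs q
    by (rule MHL.intro) (fact assms)+
  show ?thesis
  proof (intro conjI ballI)
    fix \<theta> :: "real^'d" assume th: "\<theta> \<in> Theta"
    show "uniform_limit UNIV (\<lambda>N x. \<Sum>n<N. Hterm lam p Xs q \<theta> n x)
                      (Hhat lam p Xs q \<theta>) sequentially" by (rule part1(1)[OF th])
    show "\<forall>x. Hhat lam p Xs q \<theta> x - MH_vec lam p Xs q \<theta> (Hhat lam p Xs q \<theta>) x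
               = Hfun Xs x \<theta> - hmean lam p Xs \<theta>" using part1(2)[OF th] by blast
  next
    show "\<exists>B. \<forall>\<theta>\<in>Theta. \<forall>x. norm (Hhat lam p Xs q \<theta> x) \<le> B" by (rule part2)
  next
    show "\<exists>C>0. \<forall>\<theta>\<in>Theta. \<forall>\<theta>'\<in>Theta. \<forall>x.
          norm (Hhat lam p Xs q \<theta> x - Hhat lam p Xs q \<theta>' x)
          + norm (MH_vec lam p Xs q \<theta> (Hhat lam p Xs q \<theta>) x
                  - MH_vec lam p Xs q \<theta>' (Hhat lam p Xs q \<theta>') x)
          \<le> C * norm (\<theta> - \<theta>') / Min (range (\<lambda>i. min (\<theta>$i) (\<theta>'$i)))" by (rule part3)
  qed
qed

end
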